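(* Assume (A1)–(A4). For every $\boldsymbol y\in U$ and every $\boldsymbol\nu\in\mathscr F$, $$\big\|\partial_{\boldsymbol y}^{\boldsymbol\nu}B^{-1}(\cdot,\boldsymbol y)\big\|_{L^\infty(D_{\rm ref})}\le \frac{1}{\sigma_{\min}^2}\Big(\frac{4\pi(1+\xi_{\boldsymbol b})}{\sigma_{\min}^2}\Big)^{|\boldsymbol\nu|}\sum_{\boldsymbol m\le\boldsymbol\nu}|\boldsymbol m|!\,a_{|\boldsymbol m|}\,\boldsymbol m!\,\boldsymbol b^{\boldsymbol m}\prod_{i\ge1}S(\nu_i,m_i),$$ where $a_k:=\frac{(1+\sqrt3)^{k+1}-(1-\sqrt3)^{k+1}}{2^{k+1}\sqrt3}$ for $k\ge0$.
   Context: Setting. Let $d\in\{2,3\}$, let $D_{\rm ref}\subset\mathbb R^d$ be a bounded Lipschitz domain and $U:=[0,1]^{\mathbb N}$. $\mathscr F$ is the set of finitely supported multi-indices $\boldsymbol\nu\in\mathbb N_0^{\mathbb N}$; $|\boldsymbol\nu|=\sum_j\nu_j$, $\boldsymbol\nu!=\prod_j\nu_j!$, $\boldsymbol b^{\boldsymbol\nu}=\prod_j b_j^{\nu_j}$, $\boldsymbol m\le\boldsymbol\nu$ componentwise, $\binom{\boldsymbol\nu}{\boldsymbol m}=\prod_j\binom{\nu_j}{m_j}$, $\partial_{\boldsymbol y}^{\boldsymbol\nu}=\prod_j\partial^{\nu_j}/\partial y_j^{\nu_j}$. $S(n,m)=\frac1{m!}\sum_{j=0}^m(-1)^{m-j}\binom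 mj j^n$ are Stirling numbers of the second kind ($S(0,0)=1$). Let $\boldsymbol\psi_i:D_{\rm ref}\to\mathbb R^d$ and $\boldsymbol V(\boldsymbol x,\boldsymbol y)=\boldsymbol x+\frac1{\sqrt6}\sum_{i\ge1}\sin(2\pi y_i)\boldsymbol\psi_i(\boldsymbol x)$, with Jacobian $J(\boldsymbol x,\boldsymbol y)=I+\frac1{\sqrt6}\sum_{i\ge1}\sin(2\pi y_i)\boldsymbol\psi_i'(\boldsymbol x)$; $D(\boldsymbol y)=\boldsymbol V(D_{\rm ref},\boldsymbol y)$. For functions on $D_{\rm ref}$, $\|v\|_{L^\infty}$ is the essential supremum of the absolute value / Euclidean norm / spectral norm of $v(\boldsymbol x)$ (scalar/vector/matrix case); for vector fields $\|v\|_{W^{1,\infty}}=\max(\operatorname{ess\,sup}\|v(\boldsymbol x)\|_2,\operatorname{ess\,sup}\|v'(\boldsymbol x)\|_2)$. Assumptions: (A1) for each $\boldsymbol y\in U$, $\boldsymbol V(\cdot,\boldsymbol y):\overline{D_{\rm ref}}\to\mathbb R^d$ is invertible and $C^2$; (A2) there is $C>0$ with $\|\boldsymbol V(\cdot,\boldsymbol y)\|_{C^2(\overline{D_{\rm ref}})}\le C$ and $\|\boldsymbol V^{-1}(\cdot,\boldsymbol y)\|_{C^2(\overline{D(\boldsymbol y)})}\le C$ for all $\boldsymbol y$, where $\|v\|_{C^k(\overline D)}=\max_{|\boldsymbol\nu|\le k}\sup_{\overline D}|\partial^{\boldsymbol\nu}_{\boldsymbol x}v|$; (A3) there are constants $0<\sigma_{\min}\le1\le\sigma_{\max}<\infty$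 such that all singular values of $J(\boldsymbol x,\boldsymbol y)$ lie in $[\sigma_{\min},\sigma_{\max}]$ for all $\boldsymbol x\in D_{\rm ref},\boldsymbol y\in U$; (A4) $\|\boldsymbol\psi_i\|_{W^{1,\infty}(D_{\rm ref})}<\infty$ for all $i$ and $\sum_i\|\boldsymbol\psi_i\|_{W^{1,\infty}(D_{\rm ref})}<\infty$. Define $b_i:=\frac1{\sqrt6}\|\boldsymbol\psi_i\|_{W^{1,\infty}(D_{\rm ref})}$, $\xi_{\boldsymbol b}:=\sum_i b_i$. Define $B(\boldsymbol x,\boldsymbol y):=J(\boldsymbol x,\boldsymbol y)^\top J(\boldsymbol x,\boldsymbol y)$. *)

theory Defs
  imports "HOL-Analysis.Analysis" "HOL-Combinatorics.Stirling"
begin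

definition lipschitz_domain :: "(real^'n) set \<Rightarrow> bool" where
  "lipschitz_domain D \<longleftrightarrow> open D \<and> bounded D \<and> connected D \<and> D \<noteq> {} \<and>
     (\<forall>p \<in> frontier D. \<exists>r > 0. \<exists>Q :: real^'n^'n. \<exists>k :: 'n. \<exists>g :: real^'n \<Rightarrow> real. \<exists>L.
        orthogonal_matrix Q \<and> L-lipschitz_on UNIV g \<and>
        (\<forall>u v. (\<forall>i. i \<noteq> k \<longrightarrow> u $ i = v $ i) \<longrightarrow> g u = g v) \<and>
        D \<inter> ball p r = {x \<in> ball p r. (Q *v (x - p)) $ k < g (Q *v (x - p))})"

definition xpart :: "'n \<Rightarrow> (real^'n \<Rightarrow> 'a::real_normed_vector) \<Rightarrow> real^'n \<Rightarrow> 'a" where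
  "xpart i f x = vector_derivative (\<lambda>t. f (x + t *\<^sub>R axis i 1)) (at 0)"

text \<open>f is in C^2 of the closure of the open set D: continuous on the closure, partial
derivatives up to order 2 exist in D and are uniformly continuous on D (hence extend
continuously to the closure).\<close>
definition C2_closure :: "(real^'n) set \<Rightarrow> (real^'n \<Rightarrow> real^'m) \<Rightarrow> bool" where
  "C2_closure D f \<longleftrightarrow> continuous_on (closure D) f \<and>
     (\<forall>i. \<forall>x \<in> D. (\<lambda>t. f (x + t *\<^sub>R axis i 1)) differentiable (at 0)) \<and>
     (\<forall>i j. \<forall>x \<in> D. (\<lambda>t. xpart i f (x + t *\<^sub>R axis j 1)) differentiable (at 0)) \<and>
     (\<forall>i. uniformly_continuous_on D (xpart i f)) \<and>
     (\<forall>i j. uniformly_continuous_on D (xpart j (xpart i f)))"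

text \<open>The C^2 norm of f over the closure of D is at most C (derivatives are bounded on D,
equivalently on the closure for their continuous extensions).\<close>
definition C2_norm_le :: "(real^'n) set \<Rightarrow> (real^'n \<Rightarrow> real^'m) \<Rightarrow> real \<Rightarrow> bool" where
  "C2_norm_le D f C \<longleftrightarrow> (\<forall>x \<in> closure D. norm (f x) \<le> C) \<and>
     (\<forall>i. \<forall>x \<in> D. norm (xpart i f x) \<le> C) \<and>
     (\<forall>i j. \<forall>x \<in> D. norm (xpart j (xpart i f) x) \<le> C)"

definition singular_value :: "real^'n^'n \<Rightarrow> real \<Rightarrow> bool" where
  "singular_value A s \<longleftrightarrow> s \<ge> 0 \<and> (\<exists>v. v \<noteq> 0 \<and> (transpose A ** A) *v v = (s^2) *\<^sub>R v)"

definition spec_norm :: "real^'n^'m \<Rightarrow> real" where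
  "spec_norm A = onorm (\<lambda>v. A *v v)"

definition jacobian :: "(real^'n \<Rightarrow> real^'m) \<Rightarrow> real^'n \<Rightarrow> real^'n^'m" where
  "jacobian f x = matrix (frechet_derivative f (at x))"

definition W1inf_norm :: "(real^'n) set \<Rightarrow> (real^'n \<Rightarrow> real^'n) \<Rightarrow> real" where
  "W1inf_norm D f = max (Sup ((\<lambda>x. norm (f x)) ` D)) (Sup ((\<lambda>x. spec_norm (jacobian f x)) ` D))"

definition Vmap :: "(nat \<Rightarrow> real^'n \<Rightarrow> real^'n) \<Rightarrow> real^'n \<Rightarrow> (nat \<Rightarrow> real) \<Rightarrow> real^'n" where
  "Vmap \<psi> x y = x + (1 / sqrt 6) *\<^sub>R (\<Sum>i. sin (2 * pi * y i) *\<^sub>R \<psi> i x)"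

definition Jmat :: "(nat \<Rightarrow> real^'n \<Rightarrow> real^'n) \<Rightarrow> real^'n \<Rightarrow> (nat \<Rightarrow> real) \<Rightarrow> real^'n^'n" where
  "Jmat \<psi> x y = mat 1 + (1 / sqrt 6) *\<^sub>R (\<Sum>i. sin (2 * pi * y i) *\<^sub>R jacobian (\<psi> i) x)"

definition Bmat :: "(nat \<Rightarrow> real^'n \<Rightarrow> real^'n) \<Rightarrow> real^'n \<Rightarrow> (nat \<Rightarrow> real) \<Rightarrow> real^'n^'n" where
  "Bmat \<psi> x y = transpose (Jmat \<psi> x y) ** Jmat \<psi> x y"

definition Ucube :: "(nat \<Rightarrow> real) set" where
  "Ucube = {y. \<forall>i. y i \<in> {0..1}}"

definition mi_supp :: "(nat \<Rightarrow> nat) \<Rightarrow> nat set" where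
  "mi_supp \<nu> = {j. \<nu> j \<noteq> 0}"

definition mi_abs :: "(nat \<Rightarrow> nat) \<Rightarrow> nat" where
  "mi_abs \<nu> = (\<Sum>j\<in>mi_supp \<nu>. \<nu> j)"

definition ypart :: "nat \<Rightarrow> ((nat \<Rightarrow> real) \<Rightarrow> 'a::real_normed_vector) \<Rightarrow> (nat \<Rightarrow> real) \<Rightarrow> 'a" where
  "ypart j F y = vector_derivative (\<lambda>t. F (y(j := t))) (at (y j))"

fun ypartl :: "nat list \<Rightarrow> ((nat \<Rightarrow> real) \<Rightarrow> 'a::real_normed_vector) \<Rightarrow> (nat \<Rightarrow> real) \<Rightarrow> 'a" where
  "ypartl [] F = F"
| "ypartl (j # js) F = ypart j (ypartl js F)"

definition ymderiv :: "(nat \<Rightarrow> nat) \<Rightarrow> ((nat \<Rightarrow> real) \<Rightarrow> 'a::real_normed_vector) \<Rightarrow> (nat \<Rightarrow> real) \<Rightarrow> 'a" where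
  "ymderiv \<nu> F = ypartl (concat (map (\<lambda>j. replicate (\<nu> j) j) (sorted_list_of_set (mi_supp \<nu>)))) F"

definition a_seq :: "nat \<Rightarrow> real" where
  "a_seq k = ((1 + sqrt 3) ^ (k + 1) - (1 - sqrt 3) ^ (k + 1)) / (2 ^ (k + 1) * sqrt 3)"

end

theory Submission
  imports Defs
begin


fun splits :: "'a list \<Rightarrow> ('a list \<times> 'a list) list" where
  "splits [] = [([],[])]"
| "splits (j#js) = map (\<lambda>(a,c). (a, j#c)) (splits js) @ map (\<lambda>(a,c). (j#a, c)) (splits js)"

lemma splits_hd: "splits js = ([], js) # tl (splits js) \<and> (\<forall>p\<in>set (tl (splits js)). fst p \<noteq> [])"
proof (induction js)
  case Nil then show ?case by simp
next
  case (Cons j js)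
  then obtain r where r: "splits js = ([], js) # r" "\<forall>p\<in>set r. fst p \<noteq> []" by (metis)
  have t: "tl (splits (j#js)) = map (\<lambda>(a,c). (a, j#c)) r @ map (\<lambda>(a,c). (j#a, c)) (splits js)" by (simp add: r)
  have "\<forall>p\<in>set (tl (splits (j#js))). fst p \<noteq> []"
    unfolding t using r(2) by (auto simp: case_prod_beta)
  then show ?case by (simp add: r)
qed

lemma splits_set: "p \<in> set (splits js) \<Longrightarrow> length (fst p) + length (snd p) = length js \<and> set (fst p) \<subseteq> set js \<and> set (snd p) \<subseteq> set js"
  by (induction js arbitrary: p) (auto, fastforce+)

definition lopen :: "(nat \<Rightarrow> real) set \<Rightarrow> nat set \<Rightarrow> bool" where
  "lopen \<Omega> I \<longleftrightarrow> (\<forall>y\<in>\<Omega>. \<forall>j\<in>I. \<forall>\<^sub>F t in nhds (y j). y(j:=t) \<in> \<Omega>)"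

definition smooth :: "(nat \<Rightarrow> real) set \<Rightarrow> nat set \<Rightarrow> ((nat \<Rightarrow> real) \<Rightarrow> 'a::real_normed_vector) \<Rightarrow> bool" where
  "smooth \<Omega> I F \<longleftrightarrow> (\<forall>js. set js \<subseteq> I \<longrightarrow> (\<forall>y\<in>\<Omega>. \<forall>j\<in>I. (\<lambda>t. ypartl js F (y(j:=t))) differentiable (at (y j))))"

lemma has_vector_derivative_sum_list:
  "(\<And>x. x \<in> set xs \<Longrightarrow> ((\<lambda>t. f x t) has_vector_derivative f' x) F) \<Longrightarrow>
   ((\<lambda>t. \<Sum>x\<leftarrow>xs. f x t) has_vector_derivative (\<Sum>x\<leftarrow>xs. f' x)) F"
  by (induction xs) (auto intro!: has_vector_derivative_add has_vector_derivative_const)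

lemma ypart_local:
  assumes "\<forall>\<^sub>F t in nhds (y j). F (y(j:=t)) = G (y(j:=t))"
  shows "ypart j F y = ypart j G y"
  unfolding ypart_def
  by (rule vector_derivative_cong_eq[where A=UNIV and B=UNIV]) (use assms in auto)

lemma leibniz:
  fixes prod :: "'a::real_normed_vector \<Rightarrow> 'b::real_normed_vector \<Rightarrow> 'c::real_normed_vector"
    and F :: "(nat \<Rightarrow> real) \<Rightarrow> 'a" and G :: "(nat \<Rightarrow> real) \<Rightarrow> 'b"
  assumes bb: "bounded_bilinear prod" and lo: "lopen \<Omega> I"
    and sF: "smooth \<Omega> I F" and sG: "smooth \<Omega> I G"
  shows "set js \<subseteq> I \<Longrightarrow> y \<in> \<Omega> \<Longrightarrow> ypartl js (\<lambda>y. prod (F y) (G y)) y =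
     (\<Sum>p\<leftarrow>splits js. prod (ypartl (fst p) F y) (ypartl (snd p) G y))"
proof (induction js arbitrary: y)
  case Nil then show ?case by simp
next
  case (Cons j js)
  let ?S = "\<lambda>y. (\<Sum>p\<leftarrow>splits js. prod (ypartl (fst p) F y) (ypartl (snd p) G y))"
  have jI: "j \<in> I" and jsI: "set js \<subseteq> I" using Cons.prems by auto
  have ev: "\<forall>\<^sub>F t in nhds (y j). y(j:=t) \<in> \<Omega>" using lo Cons.prems jI unfolding lopen_def by auto
  have "ypartl (j#js) (\<lambda>y. prod (F y) (G y)) y = ypart j (ypartl js (\<lambda>y. prod (F y) (G y))) y" by simp
  also have "\<dots> = ypart j ?S y"
    by (rule ypart_local, rule eventually_mono[OF ev], rule Cons.IH[OF jsI])
  also have "\<dots> = (\<Sum>p\<leftarrow>splits (j#js). prod (ypartl (fst p) F y) (ypartl (snd p) G y))"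
  proof -
    have D: "((\<lambda>t. ?S (y(j:=t))) has_vector_derivative
       (\<Sum>p\<leftarrow>splits js. prod (ypartl (fst p) F y) (ypartl (j # snd p) G y) + prod (ypartl (j # fst p) F y) (ypartl (snd p) G y))) (at (y j))"
    proof -
      have "((\<lambda>t. \<Sum>p\<leftarrow>splits js. prod (ypartl (fst p) F (y(j:=t))) (ypartl (snd p) G (y(j:=t)))) has_vector_derivative
       (\<Sum>p\<leftarrow>splits js. prod (ypartl (fst p) F y) (ypartl (j # snd p) G y) + prod (ypartl (j # fst p) F y) (ypartl (snd p) G y))) (at (y j))"
      proof (rule has_vector_derivative_sum_list)
        fix p assume p: "p \<in> set (splits js)"
        have sa: "set (fst p) \<subseteq> I" "set (snd p) \<subseteq> I" using splits_set[OF p] jsI by auto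
        have dF: "(\<lambda>t. ypartl (fst p) F (y(j:=t))) differentiable (at (y j))"
          using sF sa Cons.prems jI unfolding smooth_def by auto
        have dG: "(\<lambda>t. ypartl (snd p) G (y(j:=t))) differentiable (at (y j))"
          using sG sa Cons.prems jI unfolding smooth_def by auto
        have "((\<lambda>t. prod (ypartl (fst p) F (y(j:=t))) (ypartl (snd p) G (y(j:=t)))) has_vector_derivative
           prod (ypartl (fst p) F (y(j:=y j))) (ypart j (ypartl (snd p) G) y) + prod (ypart j (ypartl (fst p) F) y) (ypartl (snd p) G (y(j:=y j)))) (at (y j))"
          unfolding ypart_def
          by (rule bounded_bilinear.has_vector_derivative[OF bb, where s=UNIV, simplified])
             (use dF dG vector_derivative_works in auto)
        then show "((\<lambda>t. prod (ypartl (fst p) F (y(j:=t))) (ypartl (snd p) G (y(j:=t)))) has_vector_derivative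
           prod (ypartl (fst p) F y) (ypartl (j # snd p) G y) + prod (ypartl (j # fst p) F y) (ypartl (snd p) G y)) (at (y j))"
          by simp
      qed
      then show ?thesis by (simp add: case_prod_beta)
    qed
    have "ypart j ?S y = (\<Sum>p\<leftarrow>splits js. prod (ypartl (fst p) F y) (ypartl (j # snd p) G y) + prod (ypartl (j # fst p) F y) (ypartl (snd p) G y))"
      unfolding ypart_def using vector_derivative_at[OF D] .
    also have "\<dots> = (\<Sum>p\<leftarrow>splits (j#js). prod (ypartl (fst p) F y) (ypartl (snd p) G y))"
      by (simp add: sum_list_addf case_prod_beta o_def)
    finally show ?thesis .
  qed
  finally show ?case .
qed


definition Mset :: "(nat \<Rightarrow> nat) \<Rightarrow> (nat \<Rightarrow> nat) set" where
  "Mset \<nu> = {m. \<forall>i. m i \<le> \<nu> i}"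

definition cnt :: "nat list \<Rightarrow> nat \<Rightarrow> nat" where
  "cnt js i = count_list js i"

lemma cnt_Nil[simp]: "cnt [] = (\<lambda>i. 0)" by (auto simp: cnt_def)
lemma cnt_Cons: "cnt (j#js) = (cnt js)(j := cnt js j + 1)" by (auto simp: cnt_def)

lemma Mset_zero[simp]: "Mset (\<lambda>i. 0) = {\<lambda>i. 0}" by (auto simp: Mset_def)

locale maj =
  fixes I :: "nat set" and b :: "nat \<Rightarrow> real" and c \<sigma> :: real
  assumes finI: "finite I" and bnn: "\<And>i. b i \<ge> 0" and cpos: "c > 0" and spos: "\<sigma> > 0"
begin

definition w :: "(nat \<Rightarrow> real) \<Rightarrow> real" where
  "w y = (\<Sum>i\<in>I. b i * (exp (c * y i) - 1))"
definition \<Phi> :: "(nat \<Rightarrow> real) \<Rightarrow> real" where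
  "\<Phi> y = 1 / (\<sigma> - w y)"
definition \<Omega> :: "(nat \<Rightarrow> real) set" where
  "\<Omega> = {y. w y < \<sigma>}"
definition E :: "(nat \<Rightarrow> nat) \<Rightarrow> (nat \<Rightarrow> real) \<Rightarrow> real" where
  "E m y = exp (c * (\<Sum>i\<in>I. real (m i) * y i))"
definition mabs :: "(nat \<Rightarrow> nat) \<Rightarrow> nat" where
  "mabs m = (\<Sum>i\<in>I. m i)"
definition coef :: "nat \<Rightarrow> (nat \<Rightarrow> nat) \<Rightarrow> (nat \<Rightarrow> nat) \<Rightarrow> real" where
  "coef p \<nu> m = pochhammer (real p) (mabs m) * c ^ (\<Sum>i\<in>I. \<nu> i) * (\<Prod>i\<in>I. b i ^ m i * real (Stirling (\<nu> i) (m i)))"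
definition CF :: "nat \<Rightarrow> (nat \<Rightarrow> nat) \<Rightarrow> (nat \<Rightarrow> real) \<Rightarrow> real" where
  "CF p \<nu> y = (\<Sum>m\<in>Mset \<nu>. coef p \<nu> m * (\<Phi> y ^ (p + mabs m) * E m y))"

lemma w_upd: "j \<in> I \<Longrightarrow> w (y(j:=t)) = w y - b j * (exp (c * y j) - 1) + b j * (exp (c * t) - 1)"
proof -
  assume j: "j \<in> I"
  have "w (y(j:=t)) = b j * (exp (c * t) - 1) + (\<Sum>i\<in>I-{j}. b i * (exp (c * y i) - 1))"
    unfolding w_def using j finI by (simp add: sum.remove)
  moreover have "w y = b j * (exp (c * y j) - 1) + (\<Sum>i\<in>I-{j}. b i * (exp (c * y i) - 1))"
    unfolding w_def using j finI by (simp add: sum.remove)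
  ultimately show ?thesis by simp
qed

lemma E_upd: "j \<in> I \<Longrightarrow> E m (y(j:=t)) = exp (c * (\<Sum>i\<in>I-{j}. real (m i) * y i)) * exp (c * real (m j) * t)"
proof -
  assume j: "j \<in> I"
  have "(\<Sum>i\<in>I. real (m i) * (y(j:=t)) i) = real (m j) * t + (\<Sum>i\<in>I-{j}. real (m i) * y i)"
    using j finI by (simp add: sum.remove)
  then show ?thesis unfolding E_def by (simp add: exp_add[symmetric] algebra_simps)
qed

lemma E_suc: "j \<in> I \<Longrightarrow> E (m(j := m j + 1)) y = E m y * exp (c * y j)"
proof -
  assume j: "j \<in> I"
  have a: "(\<Sum>i\<in>I. real ((m(j := m j + 1)) i) * y i) = real (m j + 1) * y j + (\<Sum>i\<in>I-{j}. real (m i) * y i)"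
    using j finI by (simp add: sum.remove)
  have b: "(\<Sum>i\<in>I. real (m i) * y i) = real (m j) * y j + (\<Sum>i\<in>I-{j}. real (m i) * y i)"
    using j finI by (simp add: sum.remove)
  show ?thesis unfolding E_def a b by (simp add: exp_add[symmetric] algebra_simps)
qed

lemma mabs_suc: "j \<in> I \<Longrightarrow> mabs (m(j := m j + 1)) = mabs m + 1"
proof -
  assume j: "j \<in> I"
  have "mabs (m(j := m j + 1)) = (m j + 1) + (\<Sum>i\<in>I-{j}. m i)" unfolding mabs_def using j finI by (simp add: sum.remove)
  moreover have "mabs m = m j + (\<Sum>i\<in>I-{j}. m i)" unfolding mabs_def using j finI by (simp add: sum.remove)
  ultimately show ?thesis by simp
qed

lemma term_deriv:
  assumes j: "j \<in> I" and y: "y \<in> \<Omega>"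
  shows "((\<lambda>t. \<Phi> (y(j:=t)) ^ q * E m (y(j:=t))) has_real_derivative
     (real q * c * b j * (\<Phi> y ^ (q+1) * E (m(j := m j + 1)) y) + c * real (m j) * (\<Phi> y ^ q * E m y))) (at (y j))"
proof -
  define A where "A = \<sigma> - (w y - b j * (exp (c * y j) - 1))"
  define R where "R = exp (c * (\<Sum>i\<in>I-{j}. real (m i) * y i))"
  have f: "(\<lambda>t. \<Phi> (y(j:=t)) ^ q * E m (y(j:=t))) = (\<lambda>t. (1 / (A - b j * (exp (c * t) - 1))) ^ q * (R * exp (c * real (m j) * t)))"
  proof
    fix t
    have "\<sigma> - w (y(j:=t)) = A - b j * (exp (c * t) - 1)" by (simp add: w_upd[OF j] A_def)
    then show "\<Phi> (y(j:=t)) ^ q * E m (y(j:=t)) = (1 / (A - b j * (exp (c * t) - 1))) ^ q * (R * exp (c * real (m j) * t))"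
      by (simp add: \<Phi>_def E_upd[OF j] R_def)
  qed
  have ne: "A - b j * (exp (c * y j) - 1) \<noteq> 0" using y unfolding \<Omega>_def A_def by auto
  have Phiy: "\<Phi> y = 1 / (A - b j * (exp (c * y j) - 1))" unfolding \<Phi>_def A_def by simp
  have Ey: "E m y = R * exp (c * real (m j) * y j)" using E_upd[OF j, of m y "y j"] by (simp add: R_def)
  define g where "g t = A - b j * (exp (c * t) - 1)" for t
  have ne': "g (y j) \<noteq> 0" using ne by (simp add: g_def)
  have dg: "(g has_real_derivative (- (b j * (c * exp (c * y j))))) (at (y j))"
    unfolding g_def by (auto intro!: derivative_eq_intros)
  have di: "((\<lambda>t. 1 / g t) has_real_derivative (b j * c * exp (c * y j) * (1 / g (y j))^2)) (at (y j))"
  proof -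
    have "((\<lambda>t. inverse (g t)) has_real_derivative - (- (b j * (c * exp (c * y j))) * inverse (g (y j) ^ Suc (Suc 0)))) (at (y j))"
      by (rule DERIV_inverse_fun[OF dg ne'])
    moreover have "- (- (b j * (c * exp (c * y j))) * inverse (g (y j) ^ Suc (Suc 0))) = b j * c * exp (c * y j) * (1 / g (y j))^2"
      by (simp add: power_one_over inverse_eq_divide power2_eq_square mult.assoc)
    ultimately show ?thesis by (simp add: inverse_eq_divide)
  qed
  have dq: "((\<lambda>t. (1 / g t) ^ q) has_real_derivative (real q * (1 / g (y j)) ^ (q - 1) * (b j * c * exp (c * y j) * (1 / g (y j))^2))) (at (y j))"
    using DERIV_power[OF di, of q] by (simp add: mult_ac)
  have de: "((\<lambda>t. R * exp (c * real (m j) * t)) has_real_derivative (R * (c * real (m j) * exp (c * real (m j) * y j)))) (at (y j))"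
    by (auto intro!: derivative_eq_intros)
  have dp: "((\<lambda>t. (1 / g t) ^ q * (R * exp (c * real (m j) * t))) has_real_derivative
     (real q * (1 / g (y j)) ^ (q - 1) * (b j * c * exp (c * y j) * (1 / g (y j))^2)) * (R * exp (c * real (m j) * y j))
     + (1 / g (y j)) ^ q * (R * (c * real (m j) * exp (c * real (m j) * y j)))) (at (y j))"
    using DERIV_mult[OF dq de] by (simp add: mult.commute)
  have eq: "(real q * (1 / g (y j)) ^ (q - 1) * (b j * c * exp (c * y j) * (1 / g (y j))^2)) * (R * exp (c * real (m j) * y j))
     + (1 / g (y j)) ^ q * (R * (c * real (m j) * exp (c * real (m j) * y j)))
     = real q * c * b j * ((1 / g (y j)) ^ (q + 1) * (R * exp (c * real (m j) * y j) * exp (c * y j))) +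
         c * real (m j) * ((1 / g (y j)) ^ q * (R * exp (c * real (m j) * y j)))"
  proof (cases q)
    case 0 then show ?thesis by simp
  next
    case (Suc k) then show ?thesis by (simp add: power2_eq_square algebra_simps)
  qed
  show ?thesis unfolding f E_suc[OF j] Phiy Ey g_def[symmetric] using dp unfolding eq .
qed


lemma Mset_finite: assumes "\<forall>i. i \<notin> I \<longrightarrow> \<nu> i = 0" shows "finite (Mset \<nu>)"
proof -
  have "Mset \<nu> \<subseteq> (\<lambda>f i. if i \<in> I then f i else 0) ` (PiE I (\<lambda>i. {..\<nu> i}))"
  proof
    fix m assume m: "m \<in> Mset \<nu>"
    have "m = (\<lambda>i. if i \<in> I then restrict m I i else 0)"
      using m assms by (auto simp: Mset_def fun_eq_iff) (metis le_zero_eq)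
    moreover have "restrict m I \<in> PiE I (\<lambda>i. {..\<nu> i})" using m by (auto simp: Mset_def)
    ultimately show "m \<in> (\<lambda>f i. if i \<in> I then f i else 0) ` (PiE I (\<lambda>i. {..\<nu> i}))" by blast
  qed
  moreover have "finite (PiE I (\<lambda>i. {..\<nu> i}))" using finI by (intro finite_PiE) auto
  ultimately show ?thesis by (meson finite_imageI finite_subset)
qed

lemma coef_zero: "m j = 0 \<Longrightarrow> j \<in> I \<Longrightarrow> coef p (\<nu>(j := \<nu> j + 1)) m = 0"
  unfolding coef_def apply (subst prod_zero[OF finI]) apply (rule bexI[of _ j]) by simp_all

lemma coef_out: "m j > \<nu> j \<Longrightarrow> j \<in> I \<Longrightarrow> coef p \<nu> m = 0"
  unfolding coef_def apply (subst prod_zero[OF finI]) apply (rule bexI[of _ j]) by simp_all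

lemma coef_suc:
  assumes j: "j \<in> I"
  shows "coef p (\<nu>(j := \<nu> j + 1)) (m(j := m j + 1)) =
    c * (real (m j + 1) * coef p \<nu> (m(j := m j + 1)) + (real p + real (mabs m)) * b j * coef p \<nu> m)"
proof -
  define P where "P = (\<Prod>i\<in>I-{j}. b i ^ m i * real (Stirling (\<nu> i) (m i)))"
  define N where "N = (\<Sum>i\<in>I. \<nu> i)"
  have s1: "(\<Sum>i\<in>I. (\<nu>(j := \<nu> j + 1)) i) = N + 1"
  proof -
    have "(\<Sum>i\<in>I. (\<nu>(j := \<nu> j + 1)) i) = (\<nu> j + 1) + (\<Sum>i\<in>I-{j}. \<nu> i)" using j finI by (simp add: sum.remove)
    moreover have "N = \<nu> j + (\<Sum>i\<in>I-{j}. \<nu> i)" unfolding N_def using j finI by (simp add: sum.remove)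
    ultimately show ?thesis by simp
  qed
  have p1: "(\<Prod>i\<in>I. b i ^ (m(j := m j + 1)) i * real (Stirling ((\<nu>(j := \<nu> j + 1)) i) ((m(j := m j + 1)) i)))
     = b j ^ (m j + 1) * real (Stirling (\<nu> j + 1) (m j + 1)) * P"
    unfolding P_def using j finI by (simp add: prod.remove)
  have p2: "(\<Prod>i\<in>I. b i ^ (m(j := m j + 1)) i * real (Stirling (\<nu> i) ((m(j := m j + 1)) i)))
     = b j ^ (m j + 1) * real (Stirling (\<nu> j) (m j + 1)) * P"
    unfolding P_def using j finI by (simp add: prod.remove)
  have p3: "(\<Prod>i\<in>I. b i ^ m i * real (Stirling (\<nu> i) (m i)))
     = b j ^ m j * real (Stirling (\<nu> j) (m j)) * P"
    unfolding P_def using j finI by (simp add: prod.remove)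
  have st: "real (Stirling (\<nu> j + 1) (m j + 1)) = real (m j + 1) * real (Stirling (\<nu> j) (m j + 1)) + real (Stirling (\<nu> j) (m j))"
    by (simp add: algebra_simps)
  have po: "pochhammer (real p) (mabs m + 1) = pochhammer (real p) (mabs m) * (real p + real (mabs m))"
    by (simp add: pochhammer_rec')
  show ?thesis
    unfolding coef_def s1 p1 p2 p3 mabs_suc[OF j] po N_def[symmetric] st
    by (simp add: algebra_simps)
qed

lemma coef_gen:
  assumes j: "j \<in> I"
  shows "coef p (\<nu>(j := \<nu> j + 1)) m = c * real (m j) * coef p \<nu> m +
     (if m j = 0 then 0 else c * (real p + real (mabs (m(j := m j - 1)))) * b j * coef p \<nu> (m(j := m j - 1)))"
proof (cases "m j")
  case 0 then show ?thesis using coef_zero[of m j p \<nu>, OF 0 j] by simp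
next
  case (Suc k)
  define m' where "m' = m(j := k)"
  have m: "m = m'(j := m' j + 1)" using Suc by (simp add: m'_def fun_eq_iff)
  have "m(j := m j - 1) = m'" using Suc by (simp add: m'_def)
  then show ?thesis unfolding m using coef_suc[OF j, of p \<nu> m'] by (simp add: algebra_simps)
qed

lemma sum_step:
  assumes j: "j \<in> I" and supp: "\<forall>i. i \<notin> I \<longrightarrow> \<nu> i = 0"
  shows "(\<Sum>m\<in>Mset \<nu>. coef p \<nu> m * ((real p + real (mabs m)) * c * b j * X (m(j := m j + 1)) + c * real (m j) * X m))
       = (\<Sum>m\<in>Mset (\<nu>(j := \<nu> j + 1)). coef p (\<nu>(j := \<nu> j + 1)) m * X m)"
proof -
  define \<nu>' where "\<nu>' = \<nu>(j := \<nu> j + 1)"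
  have supp': "\<forall>i. i \<notin> I \<longrightarrow> \<nu>' i = 0" using supp j by (auto simp: \<nu>'_def)
  have fin: "finite (Mset \<nu>)" "finite (Mset \<nu>')" using Mset_finite supp supp' by auto
  have sub: "Mset \<nu> \<subseteq> Mset \<nu>'" by (auto simp: Mset_def \<nu>'_def le_SucI)
  have "(\<Sum>m\<in>Mset \<nu>'. coef p \<nu>' m * X m) =
    (\<Sum>m\<in>Mset \<nu>'. c * real (m j) * coef p \<nu> m * X m) +
    (\<Sum>m\<in>Mset \<nu>'. (if m j = 0 then 0 else c * (real p + real (mabs (m(j := m j - 1)))) * b j * coef p \<nu> (m(j := m j - 1)) * X m))"
    unfolding \<nu>'_def coef_gen[OF j] sum.distrib[symmetric] by (rule sum.cong) (auto simp: algebra_simps)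
  also have "(\<Sum>m\<in>Mset \<nu>'. c * real (m j) * coef p \<nu> m * X m) = (\<Sum>m\<in>Mset \<nu>. c * real (m j) * coef p \<nu> m * X m)"
  proof (rule sum.mono_neutral_right[OF fin(2) sub])
    show "\<forall>m\<in>Mset \<nu>' - Mset \<nu>. c * real (m j) * coef p \<nu> m * X m = 0"
    proof
      fix m assume m: "m \<in> Mset \<nu>' - Mset \<nu>"
      then have "m j > \<nu> j" by (auto simp: Mset_def \<nu>'_def split: if_splits) (metis not_less)
      then show "c * real (m j) * coef p \<nu> m * X m = 0" using coef_out[OF _ j] by simp
    qed
  qed
  also have "(\<Sum>m\<in>Mset \<nu>'. (if m j = 0 then 0 else c * (real p + real (mabs (m(j := m j - 1)))) * b j * coef p \<nu> (m(j := m j - 1)) * X m))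
     = (\<Sum>m\<in>{m\<in>Mset \<nu>'. m j \<noteq> 0}. c * (real p + real (mabs (m(j := m j - 1)))) * b j * coef p \<nu> (m(j := m j - 1)) * X m)"
    by (subst sum.inter_filter[OF fin(2)]) (rule sum.cong, auto)
  also have "\<dots> = (\<Sum>m\<in>Mset \<nu>. c * (real p + real (mabs m)) * b j * coef p \<nu> m * X (m(j := m j + 1)))"
  proof (rule sum.reindex_bij_witness[where i = "\<lambda>m. m(j := m j + 1)" and j = "\<lambda>m. m(j := m j - 1)"])
    fix m assume "m \<in> Mset \<nu>" then show "m(j := m j + 1) \<in> {m \<in> Mset \<nu>'. m j \<noteq> 0}"
      by (auto simp: Mset_def \<nu>'_def)
  next
    fix m assume m: "m \<in> {m \<in> Mset \<nu>'. m j \<noteq> 0}"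
    then have le: "\<forall>i. m i \<le> \<nu>' i" by (simp add: Mset_def)
    show "m(j := m j - 1) \<in> Mset \<nu>" unfolding Mset_def
    proof (intro CollectI allI)
      fix i show "(m(j := m j - 1)) i \<le> \<nu> i" using spec[OF le, of i] by (cases "i = j") (auto simp: \<nu>'_def)
    qed
  next
    fix m assume m: "m \<in> Mset \<nu>"
    show "(m(j := m j + 1))(j := (m(j := m j + 1)) j - 1) = m" by simp
  next
    fix m assume m: "m \<in> {m \<in> Mset \<nu>'. m j \<noteq> 0}"
    then have "m j \<noteq> 0" by simp
    then show "(m(j := m j - 1))(j := (m(j := m j - 1)) j + 1) = m" by (simp add: fun_eq_iff)
  next
    fix m assume m: "m \<in> {m \<in> Mset \<nu>'. m j \<noteq> 0}"
    then have "m j \<noteq> 0" by simp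
    then have e: "(m(j := m j - 1))(j := (m(j := m j - 1)) j + 1) = m" by (simp add: fun_eq_iff)
    show "c * (real p + real (mabs (m(j := m j - 1)))) * b j * coef p \<nu> (m(j := m j - 1)) * X ((m(j := m j - 1))(j := (m(j := m j - 1)) j + 1)) =
      c * (real p + real (mabs (m(j := m j - 1)))) * b j * coef p \<nu> (m(j := m j - 1)) * X m"
      by (simp only: e)
  qed
  finally show ?thesis unfolding \<nu>'_def[symmetric]
    by (simp add: sum.distrib algebra_simps sum_distrib_left)
qed

end


lemma ypart_deriv: "((\<lambda>t. F (y(j:=t))) has_vector_derivative D) (at (y j)) \<Longrightarrow> ypart j F y = D"
  unfolding ypart_def by (rule vector_derivative_at)

lemma ypart_rderiv: "((\<lambda>t. F (y(j:=t))) has_real_derivative D) (at (y j)) \<Longrightarrow> ypart j F y = D"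
  by (rule ypart_deriv) (simp add: has_real_derivative_iff_has_vector_derivative)

context maj begin

lemma supp_cnt: "set js \<subseteq> I \<Longrightarrow> \<forall>i. i \<notin> I \<longrightarrow> cnt js i = 0"
  by (auto simp: cnt_def count_list_0_iff)

lemma CF_deriv:
  assumes j: "j \<in> I" and y: "y \<in> \<Omega>" and supp: "\<forall>i. i \<notin> I \<longrightarrow> \<nu> i = 0"
  shows "((\<lambda>t. CF p \<nu> (y(j:=t))) has_real_derivative CF p (\<nu>(j := \<nu> j + 1)) y) (at (y j))"
proof -
  have fin: "finite (Mset \<nu>)" using Mset_finite[OF supp] .
  have "((\<lambda>t. CF p \<nu> (y(j:=t))) has_real_derivative
     (\<Sum>m\<in>Mset \<nu>. coef p \<nu> m * (real (p + mabs m) * c * b j * (\<Phi> y ^ (p + mabs m + 1) * E (m(j := m j + 1)) y) + c * real (m j) * (\<Phi> y ^ (p + mabs m) * E m y)))) (at (y j))"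
    unfolding CF_def
    by (rule DERIV_sum, rule DERIV_cmult, rule term_deriv[OF j y])
  moreover have "(\<Sum>m\<in>Mset \<nu>. coef p \<nu> m * (real (p + mabs m) * c * b j * (\<Phi> y ^ (p + mabs m + 1) * E (m(j := m j + 1)) y) + c * real (m j) * (\<Phi> y ^ (p + mabs m) * E m y)))
    = CF p (\<nu>(j := \<nu> j + 1)) y"
  proof -
    have e: "\<And>m. \<Phi> y ^ (p + mabs m + 1) * E (m(j := m j + 1)) y = \<Phi> y ^ (p + mabs (m(j:=m j+1))) * E (m(j:=m j+1)) y"
      by (simp only: mabs_suc[OF j] add.assoc)
    show ?thesis unfolding CF_def e of_nat_add by (rule sum_step[OF j supp])
  qed
  ultimately show ?thesis by simp
qed

lemma lopen_\<Omega>: "lopen \<Omega> I"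
  unfolding lopen_def
proof (intro ballI)
  fix y j assume y: "y \<in> \<Omega>" and j: "j \<in> I"
  have "isCont (\<lambda>t. w (y(j:=t))) (y j)"
    unfolding w_upd[OF j] by (intro continuous_intros)
  then have "((\<lambda>t. w (y(j:=t))) \<longlongrightarrow> w y) (at (y j))" by (simp add: isCont_def)
  then have "\<forall>\<^sub>F t in at (y j). w (y(j:=t)) < \<sigma>" using y by (intro order_tendstoD) (auto simp: \<Omega>_def)
  then show "\<forall>\<^sub>F t in nhds (y j). y(j:=t) \<in> \<Omega>" using y
    by (simp add: eventually_nhds_conv_at \<Omega>_def)
qed

lemma CF_closed: "set js \<subseteq> I \<Longrightarrow> y \<in> \<Omega> \<Longrightarrow> ypartl js (\<lambda>y. \<Phi> y ^ p) y = CF p (cnt js) y"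
proof (induction js arbitrary: y)
  case Nil
  have "coef p (\<lambda>i. 0) (\<lambda>i. 0) = 1" by (simp add: coef_def mabs_def)
  then show ?case by (simp add: CF_def mabs_def E_def)
next
  case (Cons j js)
  have j: "j \<in> I" and js: "set js \<subseteq> I" using Cons.prems by auto
  have ev: "\<forall>\<^sub>F t in nhds (y j). y(j:=t) \<in> \<Omega>" using lopen_\<Omega> Cons.prems j unfolding lopen_def by auto
  have "ypartl (j#js) (\<lambda>y. \<Phi> y ^ p) y = ypart j (ypartl js (\<lambda>y. \<Phi> y ^ p)) y" by simp
  also have "\<dots> = ypart j (CF p (cnt js)) y"
    by (rule ypart_local, rule eventually_mono[OF ev], rule Cons.IH[OF js])
  also have "\<dots> = CF p (cnt (j#js)) y"
    unfolding cnt_Cons by (rule ypart_rderiv, rule CF_deriv[OF j Cons.prems(2) supp_cnt[OF js]])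
  finally show ?case .
qed

lemma smooth_\<Phi>: "smooth \<Omega> I (\<lambda>y. \<Phi> y ^ p)"
  unfolding smooth_def
proof (intro allI impI ballI)
  fix js y j assume js: "set js \<subseteq> I" and y: "y \<in> \<Omega>" and j: "j \<in> I"
  have ev: "\<forall>\<^sub>F t in nhds (y j). y(j:=t) \<in> \<Omega>" using lopen_\<Omega> y j unfolding lopen_def by auto
  have d: "((\<lambda>t. CF p (cnt js) (y(j:=t))) has_real_derivative CF p ((cnt js)(j := cnt js j + 1)) y) (at (y j))"
    by (rule CF_deriv[OF j y supp_cnt[OF js]])
  have "((\<lambda>t. ypartl js (\<lambda>y. \<Phi> y ^ p) (y(j:=t))) has_real_derivative CF p ((cnt js)(j := cnt js j + 1)) y) (at (y j))"
    using d by (subst DERIV_cong_ev[OF refl _ refl]) (use ev in \<open>auto elim!: eventually_mono simp: CF_closed[OF js]\<close>)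
  then show "(\<lambda>t. ypartl js (\<lambda>y. \<Phi> y ^ p) (y(j:=t))) differentiable (at (y j))"
    by (auto simp: has_real_derivative_iff_has_vector_derivative intro: differentiableI_vector)
qed

definition chiD :: "nat list \<Rightarrow> (nat \<Rightarrow> real) \<Rightarrow> real" where
  "chiD a y = (if a = [] then \<sigma> - w y else if (\<forall>i\<in>set a. i = hd a) then - (c ^ length a * b (hd a) * exp (c * y (hd a))) else 0)"

lemma chiD_Cons:
  assumes j: "j \<in> I" and a: "set a \<subseteq> I"
  shows "((\<lambda>t. chiD a (y(j:=t))) has_real_derivative chiD (j#a) y) (at (y j))"
proof (cases "a = []")
  case True
  have "((\<lambda>t. \<sigma> - (w y - b j * (exp (c * y j) - 1) + b j * (exp (c * t) - 1))) has_real_derivative - (c * b j * exp (c * y j))) (at (y j))"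
    by (auto intro!: derivative_eq_intros)
  then show ?thesis using True by (simp add: chiD_def w_upd[OF j])
next
  case False
  show ?thesis
  proof (cases "\<forall>i\<in>set a. i = hd a")
    case all: True
    show ?thesis
    proof (cases "j = hd a")
      case True
      have "((\<lambda>t. - (c ^ length a * b j * exp (c * t))) has_real_derivative - (c ^ Suc (length a) * b j * exp (c * y j))) (at (y j))"
        by (auto intro!: derivative_eq_intros)
      then show ?thesis using all True False by (simp add: chiD_def)
    next
      case ne: False
      have h: "hd a \<in> set a" using False by simp
      have c1: "(\<lambda>t. chiD a (y(j:=t))) = (\<lambda>t. chiD a y)" using all ne False by (simp add: chiD_def)
      have c2: "chiD (j#a) y = 0" using ne h unfolding chiD_def by force
      show ?thesis unfolding c1 c2 by simp
    qed
  next
    case nall: False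
    have h: "hd a \<in> set a" using False by simp
    have "\<not> (\<forall>i\<in>set (j#a). i = hd (j#a))"
    proof
      assume "\<forall>i\<in>set (j#a). i = hd (j#a)"
      then have "\<forall>i\<in>set a. i = j" by simp
      moreover then have "hd a = j" using h by blast
      ultimately show False using nall by simp
    qed
    then have c2: "chiD (j#a) y = 0" unfolding chiD_def by auto
    have c1: "(\<lambda>t. chiD a (y(j:=t))) = (\<lambda>t. 0)" by (rule ext) (simp add: chiD_def nall False)
    show ?thesis unfolding c1 c2 by simp
  qed
qed

lemma chi_closed: "set a \<subseteq> I \<Longrightarrow> ypartl a (\<lambda>y. \<sigma> - w y) y = chiD a y"
proof (induction a arbitrary: y)
  case Nil then show ?case by (simp add: chiD_def)
next
  case (Cons j a)
  have j: "j \<in> I" and a: "set a \<subseteq> I" using Cons.prems by auto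
  have "ypartl a (\<lambda>y. \<sigma> - w y) = chiD a" by (rule ext) (rule Cons.IH[OF a])
  then have "ypartl (j#a) (\<lambda>y. \<sigma> - w y) y = ypart j (chiD a) y" by simp
  also have "\<dots> = chiD (j#a) y" by (rule ypart_rderiv, rule chiD_Cons[OF j a])
  finally show ?case .
qed

lemma smooth_chi: "smooth \<Omega> I (\<lambda>y. \<sigma> - w y)"
  unfolding smooth_def
proof (intro allI impI ballI)
  fix js y j assume js: "set js \<subseteq> I" and y: "y \<in> \<Omega>" and j: "j \<in> I"
  show "(\<lambda>t. ypartl js (\<lambda>y. \<sigma> - w y) (y(j:=t))) differentiable (at (y j))"
    unfolding chi_closed[OF js] using chiD_Cons[OF j js, of y]
    by (auto simp: has_real_derivative_iff_has_vector_derivative intro: differentiableI_vector)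
qed


lemma zero_\<Omega>: "(\<lambda>i. 0) \<in> \<Omega>" using spos by (simp add: \<Omega>_def w_def)

lemma w0: "w (\<lambda>i. 0) = 0" by (simp add: w_def)

lemma ypartl_local:
  assumes lo: "lopen U I" and eq: "\<And>y. y \<in> U \<Longrightarrow> F y = G y"
  shows "set js \<subseteq> I \<Longrightarrow> y \<in> U \<Longrightarrow> ypartl js F y = ypartl js G y"
proof (induction js arbitrary: y)
  case Nil then show ?case using eq by simp
next
  case (Cons j js)
  have ev: "\<forall>\<^sub>F t in nhds (y j). y(j:=t) \<in> U" using lo Cons.prems unfolding lopen_def by auto
  have "ypartl (j#js) F y = ypart j (ypartl js F) y" by simp
  also have "\<dots> = ypart j (ypartl js G) y"
  proof (rule ypart_local, rule eventually_mono[OF ev])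
    fix t assume t: "y(j:=t) \<in> U"
    have "set js \<subseteq> I" using Cons.prems by simp
    then show "ypartl js F (y(j:=t)) = ypartl js G (y(j:=t))" by (rule Cons.IH[OF _ t])
  qed
  finally show ?case by simp
qed

lemma ypartl_const: "js \<noteq> [] \<Longrightarrow> ypartl js (\<lambda>y. C) y = 0"
proof (induction js arbitrary: y)
  case Nil then show ?case by simp
next
  case (Cons j js)
  show ?case
  proof (cases "js = []")
    case True then show ?thesis by (simp add: ypart_def)
  next
    case False
    then have "ypartl js (\<lambda>y. C) = (\<lambda>y. 0)" using Cons.IH by auto
    then show ?thesis by (simp add: ypart_def)
  qed
qed

lemma scalar_rec:
  assumes js: "set js \<subseteq> I" "js \<noteq> []"
  shows "\<sigma> * ypartl js (\<lambda>y. \<Phi> y ^ 1) (\<lambda>i. 0) =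
     (\<Sum>p\<leftarrow>tl (splits js). - chiD (fst p) (\<lambda>i. 0) * ypartl (snd p) (\<lambda>y. \<Phi> y ^ 1) (\<lambda>i. 0))"
proof -
  have "ypartl js (\<lambda>y. (\<sigma> - w y) * \<Phi> y ^ 1) (\<lambda>i. 0) = ypartl js (\<lambda>y. 1) (\<lambda>i. 0)"
    by (rule ypartl_local[OF lopen_\<Omega> _ js(1) zero_\<Omega>]) (simp add: \<Phi>_def \<Omega>_def)
  also have "\<dots> = 0" using ypartl_const[OF js(2)] .
  finally have z: "ypartl js (\<lambda>y. (\<sigma> - w y) * \<Phi> y ^ 1) (\<lambda>i. 0) = 0" .
  have "ypartl js (\<lambda>y. (\<sigma> - w y) * \<Phi> y ^ 1) (\<lambda>i. 0) =
     (\<Sum>p\<leftarrow>splits js. ypartl (fst p) (\<lambda>y. \<sigma> - w y) (\<lambda>i. 0) * ypartl (snd p) (\<lambda>y. \<Phi> y ^ 1) (\<lambda>i. 0))"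
    by (rule leibniz[OF bounded_bilinear_mult lopen_\<Omega> smooth_chi smooth_\<Phi> js(1) zero_\<Omega>])
  also have "\<dots> = \<sigma> * ypartl js (\<lambda>y. \<Phi> y ^ 1) (\<lambda>i. 0) +
     (\<Sum>p\<leftarrow>tl (splits js). chiD (fst p) (\<lambda>i. 0) * ypartl (snd p) (\<lambda>y. \<Phi> y ^ 1) (\<lambda>i. 0))"
  proof -
    have "splits js = ([], js) # tl (splits js)" using splits_hd by blast
    then have "(\<Sum>p\<leftarrow>splits js. ypartl (fst p) (\<lambda>y. \<sigma> - w y) (\<lambda>i. 0) * ypartl (snd p) (\<lambda>y. \<Phi> y ^ 1) (\<lambda>i. 0))
      = (\<sigma> - w (\<lambda>i. 0)) * ypartl js (\<lambda>y. \<Phi> y ^ 1) (\<lambda>i. 0) + (\<Sum>p\<leftarrow>tl (splits js). ypartl (fst p) (\<lambda>y. \<sigma> - w y) (\<lambda>i. 0) * ypartl (snd p) (\<lambda>y. \<Phi> y ^ 1) (\<lambda>i. 0))"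
      by (metis (no_types, lifting) fst_conv snd_conv sum_list.Cons list.map(2) ypartl.simps(1))
    moreover have "(\<Sum>p\<leftarrow>tl (splits js). ypartl (fst p) (\<lambda>y. \<sigma> - w y) (\<lambda>i. 0) * ypartl (snd p) (\<lambda>y. \<Phi> y ^ 1) (\<lambda>i. 0))
       = (\<Sum>p\<leftarrow>tl (splits js). chiD (fst p) (\<lambda>i. 0) * ypartl (snd p) (\<lambda>y. \<Phi> y ^ 1) (\<lambda>i. 0))"
    proof (rule arg_cong[where f=sum_list], rule map_cong[OF refl])
      fix p assume p: "p \<in> set (tl (splits js))"
      then have "p \<in> set (splits js)" by (metis list.set_sel(2) splits_hd list.simps(3) list.sel(3) set_ConsD insert_iff list.set(2))
      then have "set (fst p) \<subseteq> I" using splits_set js(1) by blast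
      then show "ypartl (fst p) (\<lambda>y. \<sigma> - w y) (\<lambda>i. 0) * ypartl (snd p) (\<lambda>y. \<Phi> y ^ 1) (\<lambda>i. 0) = chiD (fst p) (\<lambda>i. 0) * ypartl (snd p) (\<lambda>y. \<Phi> y ^ 1) (\<lambda>i. 0)"
        by (simp add: chi_closed)
    qed
    ultimately show ?thesis by (simp add: w0)
  qed
  finally have zz: "\<sigma> * ypartl js (\<lambda>y. \<Phi> y ^ 1) (\<lambda>i. 0) +
     (\<Sum>p\<leftarrow>tl (splits js). chiD (fst p) (\<lambda>i. 0) * ypartl (snd p) (\<lambda>y. \<Phi> y ^ 1) (\<lambda>i. 0)) = 0" using z by simp
  have neg: "\<And>L. (\<Sum>p\<leftarrow>L. - chiD (fst p) (\<lambda>i. 0) * ypartl (snd p) (\<lambda>y. \<Phi> y ^ 1) (\<lambda>i. 0)) =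
      - (\<Sum>p\<leftarrow>L. chiD (fst p) (\<lambda>i. 0) * ypartl (snd p) (\<lambda>y. \<Phi> y ^ 1) (\<lambda>i. 0))"
    by (induct_tac L) simp_all
  show ?thesis unfolding neg using zz by linarith
qed

lemma coef_nonneg: "coef p \<nu> m \<ge> 0"
  unfolding coef_def using bnn cpos by (auto intro!: mult_nonneg_nonneg prod_nonneg simp: pochhammer_prod)

lemma CF_nonneg0: "CF p \<nu> (\<lambda>i. 0) \<ge> 0"
  unfolding CF_def using spos coef_nonneg by (auto intro!: sum_nonneg mult_nonneg_nonneg simp: \<Phi>_def w0 E_def)

lemma Phi_deriv_nonneg: "set js \<subseteq> I \<Longrightarrow> ypartl js (\<lambda>y. \<Phi> y ^ p) (\<lambda>i. 0) \<ge> 0"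
  using CF_closed[OF _ zero_\<Omega>] CF_nonneg0 by simp

lemma scalar_sq:
  assumes js: "set js \<subseteq> I"
  shows "ypartl js (\<lambda>y. \<Phi> y ^ 2) (\<lambda>i. 0) =
     (\<Sum>p\<leftarrow>splits js. ypartl (fst p) (\<lambda>y. \<Phi> y ^ 1) (\<lambda>i. 0) * ypartl (snd p) (\<lambda>y. \<Phi> y ^ 1) (\<lambda>i. 0))"
proof -
  have "(\<lambda>y. \<Phi> y ^ 2) = (\<lambda>y. \<Phi> y ^ 1 * \<Phi> y ^ 1)" by (simp add: power2_eq_square)
  then show ?thesis
    by (subst \<open>(\<lambda>y. \<Phi> y ^ 2) = _\<close>) (rule leibniz[OF bounded_bilinear_mult lopen_\<Omega> smooth_\<Phi> smooth_\<Phi> js zero_\<Omega>])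
qed

end


lemma mm_scaleR_left: "(r *\<^sub>R A) ** (B::real^'k^'n) = r *\<^sub>R (A ** B)" for A :: "real^'n^'m"
  by (simp add: matrix_matrix_mult_def vec_eq_iff sum_distrib_left mult.assoc)
lemma mm_scaleR_right: "A ** (r *\<^sub>R (B::real^'k^'n)) = r *\<^sub>R (A ** B)" for A :: "real^'n^'m"
  by (simp add: matrix_matrix_mult_def vec_eq_iff sum_distrib_left mult.left_commute)
lemma mm_add_left: "(A + A') ** (B::real^'k^'n) = A ** B + A' ** B" for A :: "real^'n^'m"
  by (simp add: matrix_matrix_mult_def vec_eq_iff sum.distrib distrib_right)

lemma bb_mm: "bounded_bilinear (\<lambda>(A::real^'n^'m) (B::real^'k^'n). A ** B)"
proof -
  have "bilinear (\<lambda>(A::real^'n^'m) (B::real^'k^'n). A ** B)"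
    unfolding bilinear_def
    by (auto simp: linear_iff matrix_add_ldistrib mm_add_left mm_scaleR_left mm_scaleR_right)
  then show ?thesis using bilinear_conv_bounded_bilinear by blast
qed

lemma bl_transpose: "bounded_linear (\<lambda>A::real^'n^'m. transpose A)"
proof -
  have "linear (\<lambda>A::real^'n^'m. transpose A)"
    by (auto simp: linear_iff transpose_def vec_eq_iff transpose_scalar)
  then show ?thesis using linear_conv_bounded_linear by blast
qed

lemma bb_mmt: "bounded_bilinear (\<lambda>(A::real^'n^'m) (B::real^'n^'k). A ** transpose B)"
  using bounded_bilinear.comp[OF bb_mm bounded_linear_ident bl_transpose] by simp

lemma spec_vec: "norm (A *v v) \<le> spec_norm A * norm v" for A :: "real^'n^'m"
  unfolding spec_norm_def by (rule onorm) simp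

lemma spec_nonneg: "0 \<le> spec_norm A" for A :: "real^'n^'m"
  unfolding spec_norm_def by (rule onorm_pos_le) simp

lemma spec_mult: "spec_norm (A ** B) \<le> spec_norm A * spec_norm B" for A :: "real^'n^'m" and B :: "real^'k^'n"
proof -
  have "(\<lambda>v. (A ** B) *v v) = (\<lambda>v. A *v v) \<circ> (\<lambda>v. B *v v)" by (auto simp: matrix_vector_mul_assoc)
  then show ?thesis unfolding spec_norm_def using onorm_compose[of "\<lambda>v. A *v v" "\<lambda>v. B *v v"] by simp
qed

lemma spec_add: "spec_norm (A + B) \<le> spec_norm A + spec_norm B" for A :: "real^'n^'m"
proof -
  have e: "(*v) (A + B) = (\<lambda>x. A *v x + B *v x)" by (rule ext) (simp add: matrix_vector_mult_add_rdistrib)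
  show ?thesis unfolding spec_norm_def e using onorm_triangle[of "\<lambda>v. A *v v" "\<lambda>v. B *v v"] by simp
qed

lemma spec_scaleR: "spec_norm (r *\<^sub>R A) = \<bar>r\<bar> * spec_norm A" for A :: "real^'n^'m"
proof -
  have e: "(*v) (r *\<^sub>R A) = (\<lambda>x. r *\<^sub>R (A *v x))" by (rule ext) (simp add: scaleR_matrix_vector_assoc)
  show ?thesis unfolding spec_norm_def e using onorm_scaleR[of "\<lambda>v. A *v v" r] by simp
qed

lemma spec_neg: "spec_norm (- A) = spec_norm A" for A :: "real^'n^'m"
  using spec_scaleR[of "-1" A] by simp

lemma spec_zero: "spec_norm (0::real^'n^'m) = 0"
proof -
  have e: "(*v) (0::real^'n^'m) = (\<lambda>x. 0)" by (rule ext) simp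
  show ?thesis unfolding spec_norm_def e by (rule onorm_zero)
qed

lemma spec_le: "(\<And>v. norm (A *v v) \<le> B * norm v) \<Longrightarrow> spec_norm A \<le> B" for A :: "real^'n^'m"
  unfolding spec_norm_def by (rule onorm_le)

lemma spec_transpose: "spec_norm (transpose A) \<le> spec_norm A" for A :: "real^'n^'m"
proof (rule spec_le)
  fix v :: "real^'m"
  have "norm (transpose A *v v) ^ 2 = inner (transpose A *v v) (transpose A *v v)" by (simp add: power2_norm_eq_inner)
  also have "\<dots> = inner v (A *v (transpose A *v v))"
    by (metis dot_lmul_matrix transpose_matrix_vector)
  also have "\<dots> \<le> norm v * norm (A *v (transpose A *v v))" by (rule Cauchy_Schwarz_ineq2[THEN order_trans[OF abs_ge_self]])
  also have "\<dots> \<le> norm v * (spec_norm A * norm (transpose A *v v))" by (rule mult_left_mono[OF spec_vec norm_ge_zero])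
  finally have *: "norm (transpose A *v v) ^ 2 \<le> norm v * (spec_norm A * norm (transpose A *v v))" .
  show "norm (transpose A *v v) \<le> spec_norm A * norm v"
  proof (cases "norm (transpose A *v v) = 0")
    case True then show ?thesis using spec_nonneg[of A] by simp
  next
    case False
    then have "norm (transpose A *v v) > 0" by simp
    with * show ?thesis by (simp add: power2_eq_square mult.commute mult.left_commute)
  qed
qed

lemma spec_le_frob: "spec_norm A \<le> real CARD('m) * real CARD('n) * norm A" for A :: "real^'n^'m"
  unfolding spec_norm_def
proof (rule onorm_le_matrix_component)
  fix i j show "\<bar>A $ i $ j\<bar> \<le> norm A"
    using component_le_norm_cart[of "A$i" j] Finite_Cartesian_Product.norm_nth_le[of A i] by linarith
qed

lemma row_le_spec: "norm (A $ i) \<le> spec_norm A" for A :: "real^'n^'m"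
proof -
  have "norm (A $ i) ^ 2 = (A *v (A $ i)) $ i" by (simp add: matrix_mult_dot power2_norm_eq_inner)
  also have "\<dots> \<le> norm (A *v (A $ i))" by (meson abs_ge_self component_le_norm_cart order_trans)
  also have "\<dots> \<le> spec_norm A * norm (A $ i)" by (rule spec_vec)
  finally have *: "norm (A $ i) ^ 2 \<le> spec_norm A * norm (A $ i)" .
  show ?thesis
  proof (cases "norm (A $ i) = 0")
    case True then show ?thesis using spec_nonneg[of A] by simp
  next
    case False then show ?thesis using * by (simp add: power2_eq_square)
  qed
qed

lemma frob_le_spec: "norm A \<le> real CARD('m) * spec_norm A" for A :: "real^'n^'m"
proof -
  have "norm A \<le> (\<Sum>i\<in>UNIV. norm (A $ i))" unfolding norm_vec_def by (rule L2_set_le_sum) simp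
  also have "\<dots> \<le> (\<Sum>i\<in>(UNIV::'m set). spec_norm A)" by (rule sum_mono) (rule row_le_spec)
  finally show ?thesis by simp
qed

lemma spec_sum_list: "spec_norm (\<Sum>x\<leftarrow>xs. f x) \<le> (\<Sum>x\<leftarrow>xs. spec_norm (f x))" for f :: "'a \<Rightarrow> real^'n^'m"
  by (induction xs) (auto simp: spec_zero intro: order_trans[OF spec_add])


lemma vec_caratheodory:
  fixes f g :: "real \<Rightarrow> 'a::real_normed_vector"
  assumes eq: "\<And>z. f z - f x = (z - x) *\<^sub>R g z" and cont: "isCont g x"
  shows "(f has_vector_derivative g x) (at x)"
proof -
  have bl: "bounded_linear (\<lambda>h. h *\<^sub>R g x)" by (rule bounded_linear_scaleR_left)
  have "(\<lambda>h. g (x + h)) \<midarrow>0\<rightarrow> g x" using cont by (simp add: isCont_iff)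
  then have "(\<lambda>h. norm (g (x + h) - g x)) \<midarrow>0\<rightarrow> 0"
    by (simp add: tendsto_norm_zero_iff LIM_zero)
  moreover have "\<forall>\<^sub>F h in at 0. norm (g (x + h) - g x) = norm (f (x + h) - f x - h *\<^sub>R g x) / norm h"
  proof -
    have ev0: "\<forall>\<^sub>F h in at (0::real). h \<noteq> 0" by (simp add: eventually_at_filter)
    show ?thesis
    proof (rule eventually_mono[OF ev0])
    fix h :: real assume h: "h \<noteq> 0"
    have "f (x + h) - f x - h *\<^sub>R g x = h *\<^sub>R (g (x + h) - g x)" using eq[of "x + h"] by (simp add: scaleR_diff_right)
    then show "norm (g (x + h) - g x) = norm (f (x + h) - f x - h *\<^sub>R g x) / norm h" using h by simp
  qed
  qed
  ultimately have "(\<lambda>h. norm (f (x + h) - f x - h *\<^sub>R g x) / norm h) \<midarrow>0\<rightarrow> 0"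
    by (rule Lim_transform_eventually)
  then show ?thesis unfolding has_vector_derivative_def has_derivative_at using bl by blast
qed

lemma sin_shift: "sin (x + pi / 2) = cos x" by (simp add: sin_add)

locale mloc =
  fixes M :: "nat \<Rightarrow> real^'n^'n" and J :: "(nat \<Rightarrow> real) \<Rightarrow> real^'n^'n" and \<sigma> :: real
  assumes summ: "summable (\<lambda>i. norm (M i))"
    and J_eq: "\<And>y. J y = mat 1 + (1 / sqrt 6) *\<^sub>R (\<Sum>i. sin (2 * pi * y i) *\<^sub>R M i)"
    and sigpos: "\<sigma> > 0"
    and lower: "\<And>y v. \<sigma> * norm v \<le> norm (J y *v v)"
begin

definition D :: "nat \<Rightarrow> nat \<Rightarrow> (nat \<Rightarrow> real) \<Rightarrow> real^'n^'n" where
  "D j k y = ((2 * pi) ^ k * sin (2 * pi * y j + real k * pi / 2) / sqrt 6) *\<^sub>R M j"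

definition JD :: "nat list \<Rightarrow> (nat \<Rightarrow> real) \<Rightarrow> real^'n^'n" where
  "JD a y = (if a = [] then J y else if (\<forall>i\<in>set a. i = hd a) then D (hd a) (length a) y else 0)"

definition K :: "(nat \<Rightarrow> real) \<Rightarrow> real^'n^'n" where
  "K y = matrix_inv (J y)"

lemma J_upd: "J (y(j:=t)) = J y + ((sin (2 * pi * t) - sin (2 * pi * y j)) / sqrt 6) *\<^sub>R M j"
proof -
  define f where "f i = sin (2 * pi * y i) *\<^sub>R M i" for i
  have sf: "summable f"
  proof (rule summable_comparison_test'[OF summ, of 0])
    fix n show "norm (f n) \<le> norm (M n)" unfolding f_def by (simp add: mult_left_le_one_le abs_sin_le_one)
  qed
  have e: "(\<lambda>i. sin (2 * pi * (y(j:=t)) i) *\<^sub>R M i) = (\<lambda>i. f i + (if i = j then (sin (2 * pi * t) - sin (2 * pi * y j)) *\<^sub>R M j else 0))"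
    by (auto simp: f_def fun_eq_iff scaleR_diff_left)
  have s1: "(\<lambda>i. if i = j then (sin (2 * pi * t) - sin (2 * pi * y j)) *\<^sub>R M j else 0) sums ((sin (2 * pi * t) - sin (2 * pi * y j)) *\<^sub>R M j)"
    using sums_single[of j "\<lambda>_. (sin (2 * pi * t) - sin (2 * pi * y j)) *\<^sub>R M j"] by simp
  have "(\<Sum>i. sin (2 * pi * (y(j:=t)) i) *\<^sub>R M i) = (\<Sum>i. f i) + (sin (2 * pi * t) - sin (2 * pi * y j)) *\<^sub>R M j"
    unfolding e using suminf_add[OF sf sums_summable[OF s1]] sums_unique[OF s1] by simp
  then have "J (y(j:=t)) = mat 1 + (1 / sqrt 6) *\<^sub>R ((\<Sum>i. f i) + (sin (2 * pi * t) - sin (2 * pi * y j)) *\<^sub>R M j)"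
    unfolding J_eq f_def by simp
  also have "\<dots> = (mat 1 + (1 / sqrt 6) *\<^sub>R (\<Sum>i. f i)) + ((sin (2 * pi * t) - sin (2 * pi * y j)) / sqrt 6) *\<^sub>R M j"
    by (simp add: scaleR_add_right)
  also have "mat 1 + (1 / sqrt 6) *\<^sub>R (\<Sum>i. f i) = J y" unfolding J_eq f_def ..
  finally show ?thesis .
qed

lemma scaleR_const_deriv:
  "(f has_real_derivative f') (at x) \<Longrightarrow> ((\<lambda>t. f t *\<^sub>R (A::'a::real_normed_vector)) has_vector_derivative f' *\<^sub>R A) (at x)"
  using has_vector_derivative_scaleR[of f f' x UNIV "\<lambda>_. A" 0] by simp

lemma J_deriv: "((\<lambda>t. J (y(j:=t))) has_vector_derivative D j 1 y) (at (y j))"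
proof -
  have "sin (2*pi*y j + real 1 * pi/2) = cos (2*pi*y j)" using sin_shift by simp
  then have "((\<lambda>t. (sin (2 * pi * t) - sin (2 * pi * y j)) / sqrt 6) has_real_derivative
      (2 * pi) ^ 1 * sin (2 * pi * y j + real 1 * pi / 2) / sqrt 6) (at (y j))"
    by (auto intro!: derivative_eq_intros simp: field_simps)
  then have "((\<lambda>t. ((sin (2 * pi * t) - sin (2 * pi * y j)) / sqrt 6) *\<^sub>R M j) has_vector_derivative D j 1 y) (at (y j))"
    unfolding D_def by (rule scaleR_const_deriv)
  then have "((\<lambda>t. J y + ((sin (2 * pi * t) - sin (2 * pi * y j)) / sqrt 6) *\<^sub>R M j) has_vector_derivative 0 + D j 1 y) (at (y j))"
    by (intro has_vector_derivative_add has_vector_derivative_const)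
  then show ?thesis unfolding J_upd by simp
qed

lemma D_deriv_same: "((\<lambda>t. D j k (y(j:=t))) has_vector_derivative D j (Suc k) y) (at (y j))"
proof -
  have "sin (2 * pi * y j + real (Suc k) * pi / 2) = cos (2 * pi * y j + real k * pi / 2)"
    using sin_shift[of "2 * pi * y j + real k * pi / 2"] by (simp add: algebra_simps add_divide_distrib)
  then have "((\<lambda>t. (2 * pi) ^ k * sin (2 * pi * t + real k * pi / 2) / sqrt 6) has_real_derivative (2 * pi) ^ Suc k * sin (2 * pi * y j + real (Suc k) * pi / 2) / sqrt 6) (at (y j))"
    by (auto intro!: derivative_eq_intros simp: field_simps)
  then show ?thesis unfolding D_def by (simp add: scaleR_const_deriv)
qed

lemma D_deriv_other: "i \<noteq> j \<Longrightarrow> ((\<lambda>t. D i k (y(j:=t))) has_vector_derivative 0) (at (y j))"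
  unfolding D_def by simp

lemma JD_closed: "ypartl a J y = JD a y"
proof (induction a arbitrary: y)
  case Nil then show ?case by (simp add: JD_def)
next
  case (Cons j a)
  have e: "ypartl a J = JD a" using Cons.IH by auto
  have "ypart j (JD a) y = JD (j#a) y"
  proof (rule ypart_deriv)
    show "((\<lambda>t. JD a (y(j:=t))) has_vector_derivative JD (j#a) y) (at (y j))"
    proof (cases "a = []")
      case True then show ?thesis using J_deriv by (simp add: JD_def)
    next
      case False
      then have h: "hd a \<in> set a" by simp
      show ?thesis
      proof (cases "\<forall>i\<in>set a. i = hd a")
        case all: True
        show ?thesis
        proof (cases "j = hd a")
          case True then show ?thesis using all False D_deriv_same[of "hd a"] by (simp add: JD_def)
        next
          case ne: False
          have c2: "JD (j#a) y = 0" using ne h unfolding JD_def by force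
          have c1: "(\<lambda>t. JD a (y(j:=t))) = (\<lambda>t. D (hd a) (length a) (y(j:=t)))" using all False by (simp add: JD_def)
          show ?thesis unfolding c1 c2 using D_deriv_other[OF ne[symmetric]] by simp
        qed
      next
        case nall: False
        have "\<not> (\<forall>i\<in>set (j#a). i = hd (j#a))"
        proof
          assume "\<forall>i\<in>set (j#a). i = hd (j#a)"
          then have "\<forall>i\<in>set a. i = j" by simp
          moreover then have "hd a = j" using h by blast
          ultimately show False using nall by simp
        qed
        then have c2: "JD (j#a) y = 0" unfolding JD_def by auto
        have c1: "(\<lambda>t. JD a (y(j:=t))) = (\<lambda>t. 0)" by (rule ext) (simp add: JD_def nall False)
        show ?thesis unfolding c1 c2 by simp
      qed
    qed
  qed
  then show ?case using e by simp
qed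

lemma J_inv: "invertible (J y)"
proof -
  have "\<forall>v. J y *v v = 0 \<longrightarrow> v = 0"
  proof (intro allI impI)
    fix v assume "J y *v v = 0"
    then have "\<sigma> * norm v \<le> 0" using lower[of v y] by simp
    then show "v = 0" using sigpos by (simp add: mult_le_0_iff)
  qed
  then show ?thesis using matrix_left_invertible_ker invertible_left_inverse by blast
qed

lemma K_left: "K y ** J y = mat 1" and K_right: "J y ** K y = mat 1"
proof -
  have "\<exists>A'. J y ** A' = mat 1 \<and> A' ** J y = mat 1" using J_inv[of y] unfolding invertible_def .
  then have "J y ** K y = mat 1 \<and> K y ** J y = mat 1" unfolding K_def matrix_inv_def by (rule someI_ex)
  then show "K y ** J y = mat 1" "J y ** K y = mat 1" by auto
qed

lemma K_bound: "spec_norm (K y) \<le> 1 / \<sigma>"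
proof (rule spec_le)
  fix v :: "real^'n"
  have "\<sigma> * norm (K y *v v) \<le> norm (J y *v (K y *v v))" by (rule lower)
  also have "J y *v (K y *v v) = v" by (simp add: matrix_vector_mul_assoc K_right)
  finally show "norm (K y *v v) \<le> 1 / \<sigma> * norm v" using sigpos by (simp add: field_simps)
qed


lemma K_diff:
  "K (y(j:=t)) - K y = - ((sin (2 * pi * t) - sin (2 * pi * y j)) / sqrt 6) *\<^sub>R (K (y(j:=t)) ** (M j ** K y))"
proof -
  define s where "s = (sin (2 * pi * t) - sin (2 * pi * y j)) / sqrt 6"
  define Kt where "Kt = K (y(j:=t))"
  have "K y = (Kt ** J (y(j:=t))) ** K y" by (simp add: Kt_def K_left)
  also have "\<dots> = Kt ** (J (y(j:=t)) ** K y)" by (simp add: matrix_mul_assoc)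
  also have "J (y(j:=t)) ** K y = mat 1 + s *\<^sub>R (M j ** K y)"
    unfolding J_upd s_def by (simp add: mm_add_left mm_scaleR_left K_right)
  also have "Kt ** (mat 1 + s *\<^sub>R (M j ** K y)) = Kt + s *\<^sub>R (Kt ** (M j ** K y))"
    by (simp add: matrix_add_ldistrib mm_scaleR_right)
  finally have "K y = Kt + s *\<^sub>R (Kt ** (M j ** K y))" .
  then show ?thesis unfolding s_def[symmetric] Kt_def[symmetric] by (simp add: algebra_simps)
qed

lemma K_cont: "isCont (\<lambda>t. K (y(j:=t))) (y j)"
proof -
  define s where "s t = (sin (2 * pi * t) - sin (2 * pi * y j)) / sqrt 6" for t
  define C where "C = real CARD('n) * (1 / \<sigma> * (spec_norm (M j) * (1 / \<sigma>)))"
  have bnd: "norm (K (y(j:=t)) - K y) \<le> \<bar>s t\<bar> * C" for t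
  proof -
    have "norm (K (y(j:=t)) - K y) = \<bar>s t\<bar> * norm (K (y(j:=t)) ** (M j ** K y))"
      unfolding K_diff s_def by simp
    also have "norm (K (y(j:=t)) ** (M j ** K y)) \<le> real CARD('n) * spec_norm (K (y(j:=t)) ** (M j ** K y))"
      by (rule frob_le_spec)
    also have "spec_norm (K (y(j:=t)) ** (M j ** K y)) \<le> spec_norm (K (y(j:=t))) * (spec_norm (M j) * spec_norm (K y))"
      by (meson order_trans spec_mult mult_left_mono spec_nonneg)
    also have "\<dots> \<le> 1 / \<sigma> * (spec_norm (M j) * (1 / \<sigma>))"
      by (intro mult_mono K_bound mult_nonneg_nonneg spec_nonneg) (use sigpos in auto)
    finally show ?thesis unfolding C_def by (simp add: mult_left_mono)
  qed
  have "((\<lambda>t. \<bar>s t\<bar> * C) \<longlongrightarrow> \<bar>s (y j)\<bar> * C) (at (y j))"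
    unfolding s_def by (intro tendsto_intros) simp_all
  then have "((\<lambda>t. \<bar>s t\<bar> * C) \<longlongrightarrow> 0) (at (y j))" by (simp add: s_def)
  then have "((\<lambda>t. K (y(j:=t)) - K y) \<longlongrightarrow> 0) (at (y j))"
    by (rule Lim_null_comparison[rotated]) (auto intro: always_eventually bnd)
  then show ?thesis unfolding isCont_def by (simp add: LIM_zero_iff)
qed

lemma K_deriv: "((\<lambda>t. K (y(j:=t))) has_vector_derivative - (K y ** (D j 1 y ** K y))) (at (y j))"
proof -
  define s where "s t = (sin (2 * pi * t) - sin (2 * pi * y j)) / sqrt 6" for t
  have "(s has_real_derivative 2 * pi * cos (2 * pi * y j) / sqrt 6) (at (y j))"
    unfolding s_def by (auto intro!: derivative_eq_intros simp: field_simps)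
  then obtain q where q: "\<forall>z. s z - s (y j) = q z * (z - y j)" "continuous (at (y j)) q" "q (y j) = 2 * pi * cos (2 * pi * y j) / sqrt 6"
    using DERIV_caratheodory_within[of s _ "y j" UNIV] by auto
  define g where "g z = - q z *\<^sub>R (K (y(j:=z)) ** (M j ** K y))" for z
  have eq: "K (y(j:=z)) - K (y(j:= y j)) = (z - y j) *\<^sub>R g z" for z
    using K_diff[of y j z] q(1) by (simp add: s_def g_def del: real_sqrt_eq_zero_cancel_iff)
  have cg: "isCont g (y j)"
  proof -
    have "isCont (\<lambda>z. K (y(j:=z)) ** (M j ** K y)) (y j)"
      using K_cont[of y j] unfolding isCont_def
      by (rule bounded_bilinear.tendsto[OF bb_mm]) simp
    then show ?thesis unfolding g_def using q(2) by (intro continuous_intros) auto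
  qed
  have "((\<lambda>t. K (y(j:=t))) has_vector_derivative g (y j)) (at (y j))"
    by (rule vec_caratheodory[OF eq cg])
  moreover have "g (y j) = - (K y ** (D j 1 y ** K y))"
  proof -
    have "sin (2 * pi * y j + real 1 * pi / 2) = cos (2 * pi * y j)" using sin_shift by simp
    then have "D j 1 y = (2 * pi * cos (2 * pi * y j) / sqrt 6) *\<^sub>R M j" unfolding D_def by simp
    then show ?thesis unfolding g_def q(3) by (simp add: mm_scaleR_left mm_scaleR_right)
  qed
  ultimately show ?thesis by simp
qed

inductive_set G :: "((nat \<Rightarrow> real) \<Rightarrow> real^'n^'n) set" where
  gK: "K \<in> G"
| gJ: "J \<in> G"
| gD: "D j k \<in> G"
| g0: "(\<lambda>y. 0) \<in> G"
| gmul: "F \<in> G \<Longrightarrow> H \<in> G \<Longrightarrow> (\<lambda>y. F y ** H y) \<in> G"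
| gadd: "F \<in> G \<Longrightarrow> H \<in> G \<Longrightarrow> (\<lambda>y. F y + H y) \<in> G"
| gneg: "F \<in> G \<Longrightarrow> (\<lambda>y. - F y) \<in> G"

lemma G_deriv: "F \<in> G \<Longrightarrow> \<exists>F'\<in>G. \<forall>y. ((\<lambda>t. F (y(j:=t))) has_vector_derivative F' y) (at (y j))"
proof (induction rule: G.induct)
  case gK
  show ?case
  proof (rule bexI[where x="\<lambda>y. - (K y ** (D j 1 y ** K y))"])
    show "\<forall>y. ((\<lambda>t. K (y(j:=t))) has_vector_derivative - (K y ** (D j 1 y ** K y))) (at (y j))"
      using K_deriv by blast
    show "(\<lambda>y. - (K y ** (D j 1 y ** K y))) \<in> G"
      by (rule gneg, rule gmul, rule gK, rule gmul, rule gD, rule gK)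
  qed
next
  case gJ
  show ?case by (rule bexI[where x="D j 1"]) (use J_deriv in blast, rule gD)
next
  case (gD i k)
  show ?case
  proof (cases "i = j")
    case True then show ?thesis by (intro bexI[where x="D j (Suc k)"]) (use D_deriv_same in blast, rule gD)
  next
    case False then show ?thesis by (intro bexI[where x="\<lambda>y. 0"]) (use D_deriv_other[OF False] in blast, rule g0)
  qed
next
  case g0
  show ?case by (rule bexI[where x="\<lambda>y. 0"]) (auto intro: G.intros)
next
  case (gmul F H)
  then obtain F' H' where F': "F' \<in> G" "\<forall>y. ((\<lambda>t. F (y(j:=t))) has_vector_derivative F' y) (at (y j))"
    and H': "H' \<in> G" "\<forall>y. ((\<lambda>t. H (y(j:=t))) has_vector_derivative H' y) (at (y j))" by blast
  show ?case
  proof (rule bexI[where x="\<lambda>y. F y ** H' y + F' y ** H y"])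
    show "(\<lambda>y. F y ** H' y + F' y ** H y) \<in> G" using gmul F' H' by (intro G.intros)
    show "\<forall>y. ((\<lambda>t. F (y(j:=t)) ** H (y(j:=t))) has_vector_derivative F y ** H' y + F' y ** H y) (at (y j))"
    proof
      fix y
      show "((\<lambda>t. F (y(j:=t)) ** H (y(j:=t))) has_vector_derivative F y ** H' y + F' y ** H y) (at (y j))"
        using bounded_bilinear.has_vector_derivative[OF bb_mm F'(2)[rule_format, of y] H'(2)[rule_format, of y]]
        by simp
    qed
  qed
next
  case (gadd F H)
  then obtain F' H' where F': "F' \<in> G" "\<forall>y. ((\<lambda>t. F (y(j:=t))) has_vector_derivative F' y) (at (y j))"
    and H': "H' \<in> G" "\<forall>y. ((\<lambda>t. H (y(j:=t))) has_vector_derivative H' y) (at (y j))" by blast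
  show ?case
  proof (rule bexI[where x="\<lambda>y. F' y + H' y"])
    show "(\<lambda>y. F' y + H' y) \<in> G" using F' H' by (intro G.intros)
    show "\<forall>y. ((\<lambda>t. F (y(j:=t)) + H (y(j:=t))) has_vector_derivative F' y + H' y) (at (y j))"
    proof
      fix y show "((\<lambda>t. F (y(j:=t)) + H (y(j:=t))) has_vector_derivative F' y + H' y) (at (y j))"
        by (rule has_vector_derivative_add[OF F'(2)[rule_format, of y] H'(2)[rule_format, of y]])
    qed
  qed
next
  case (gneg F)
  then obtain F' where F': "F' \<in> G" "\<forall>y. ((\<lambda>t. F (y(j:=t))) has_vector_derivative F' y) (at (y j))" by blast
  show ?case
  proof (rule bexI[where x="\<lambda>y. - F' y"])
    show "(\<lambda>y. - F' y) \<in> G" using F' by (intro G.intros)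
    show "\<forall>y. ((\<lambda>t. - F (y(j:=t))) has_vector_derivative - F' y) (at (y j))"
    proof
      fix y show "((\<lambda>t. - F (y(j:=t))) has_vector_derivative - F' y) (at (y j))"
        by (rule has_vector_derivative_minus[OF F'(2)[rule_format, of y]])
    qed
  qed
qed

lemma ypartl_G: "F \<in> G \<Longrightarrow> ypartl js F \<in> G"
proof (induction js)
  case Nil then show ?case by simp
next
  case (Cons j js)
  then obtain F' where F': "F' \<in> G" "\<forall>y. ((\<lambda>t. ypartl js F (y(j:=t))) has_vector_derivative F' y) (at (y j))"
    using G_deriv by blast
  have "ypartl (j#js) F = F'" using F'(2) by (auto simp: fun_eq_iff intro: ypart_deriv)
  then show ?case using F'(1) by simp
qed

lemma smooth_G: "F \<in> G \<Longrightarrow> smooth UNIV I F"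
  unfolding smooth_def
proof (intro allI impI ballI)
  fix js y j assume F: "F \<in> G"
  obtain F' where "F' \<in> G" "\<forall>y. ((\<lambda>t. ypartl js F (y(j:=t))) has_vector_derivative F' y) (at (y j))"
    using G_deriv[OF ypartl_G[OF F]] by blast
  then show "(\<lambda>t. ypartl js F (y(j:=t))) differentiable (at (y j))" by (auto intro: differentiableI_vector)
qed

lemma lopen_UNIV: "lopen UNIV I" unfolding lopen_def by simp

end


locale both = maj I b "2 * pi" \<sigma> + mloc M J \<sigma> for I b \<sigma> M J +
  assumes bM: "\<And>j. j \<in> I \<Longrightarrow> spec_norm (M j) / sqrt 6 \<le> b j"
begin

lemma JD_bound:
  assumes a: "a \<noteq> []" "set a \<subseteq> I"
  shows "spec_norm (JD a y) \<le> - chiD a (\<lambda>i. 0)"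
proof (cases "\<forall>i\<in>set a. i = hd a")
  case True
  have h: "hd a \<in> I" using a by auto
  have "spec_norm (JD a y) = \<bar>(2 * pi) ^ length a * sin (2 * pi * y (hd a) + real (length a) * pi / 2) / sqrt 6\<bar> * spec_norm (M (hd a))"
    using a True by (simp add: JD_def D_def spec_scaleR)
  also have "\<dots> = (2 * pi) ^ length a * \<bar>sin (2 * pi * y (hd a) + real (length a) * pi / 2)\<bar> * (spec_norm (M (hd a)) / sqrt 6)"
    by (simp add: abs_mult)
  also have "\<dots> \<le> (2 * pi) ^ length a * 1 * b (hd a)"
    by (intro mult_mono bM[OF h] abs_sin_le_one) (auto intro: spec_nonneg divide_nonneg_pos)
  also have "\<dots> = - chiD a (\<lambda>i. 0)" using a True by (simp add: chiD_def)
  finally show ?thesis .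
next
  case False
  have "JD a y = 0" unfolding JD_def using a False by auto
  moreover have "chiD a (\<lambda>i. 0) = 0" unfolding chiD_def using a False by auto
  ultimately show ?thesis by (simp add: spec_zero)
qed

lemma tl_splits: "p \<in> set (tl (splits js)) \<Longrightarrow> p \<in> set (splits js) \<and> fst p \<noteq> []"
proof -
  assume p: "p \<in> set (tl (splits js))"
  have "splits js = ([], js) # tl (splits js)" "\<forall>p\<in>set (tl (splits js)). fst p \<noteq> []" using splits_hd by blast+
  then show ?thesis using p by (metis list.set_intros(2))
qed

lemma sum_list_le: "(\<And>x. x \<in> set xs \<Longrightarrow> f x \<le> g x) \<Longrightarrow> (\<Sum>x\<leftarrow>xs. f x) \<le> (\<Sum>x\<leftarrow>xs. (g x :: real))"
  by (induction xs) (auto intro: add_mono)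

lemma K_deriv_bound:
  "set js \<subseteq> I \<Longrightarrow> spec_norm (ypartl js K y) \<le> ypartl js (\<lambda>y. \<Phi> y ^ 1) (\<lambda>i. 0)"
proof (induction "length js" arbitrary: js y rule: less_induct)
  case less
  show ?case
  proof (cases "js = []")
    case True then show ?thesis using K_bound[of y] by (simp add: \<Phi>_def w0)
  next
    case ne: False
    define S where "S = (\<Sum>p\<leftarrow>tl (splits js). JD (fst p) y ** ypartl (snd p) K y)"
    have "ypartl js (\<lambda>y. J y ** K y) y = (\<Sum>p\<leftarrow>splits js. ypartl (fst p) J y ** ypartl (snd p) K y)"
      by (rule leibniz[OF bb_mm lopen_UNIV smooth_G[OF gJ] smooth_G[OF gK] less.prems UNIV_I])
    also have "\<dots> = J y ** ypartl js K y + S"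
    proof -
      have "splits js = ([], js) # tl (splits js)" using splits_hd by blast
      then show ?thesis unfolding S_def JD_closed
        by (metis (no_types, lifting) fst_conv snd_conv sum_list.Cons list.map(2) ypartl.simps(1) JD_closed)
    qed
    finally have e1: "ypartl js (\<lambda>y. J y ** K y) y = J y ** ypartl js K y + S" .
    have "ypartl js (\<lambda>y. J y ** K y) y = 0"
      using ypartl_const[OF ne, of "mat 1 :: real^'n^'n"] by (simp add: K_right)
    with e1 have e2: "J y ** ypartl js K y = - S" by (simp add: eq_neg_iff_add_eq_0)
    have "ypartl js K y = K y ** (J y ** ypartl js K y)" by (simp add: matrix_mul_assoc K_left)
    also have "\<dots> = - (K y ** S)" unfolding e2 using mm_scaleR_right[of "K y" "-1" S] by simp
    finally have e3: "ypartl js K y = - (K y ** S)" .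
    have "spec_norm S \<le> (\<Sum>p\<leftarrow>tl (splits js). spec_norm (JD (fst p) y ** ypartl (snd p) K y))"
      unfolding S_def by (rule spec_sum_list)
    also have "\<dots> \<le> (\<Sum>p\<leftarrow>tl (splits js). - chiD (fst p) (\<lambda>i. 0) * ypartl (snd p) (\<lambda>y. \<Phi> y ^ 1) (\<lambda>i. 0))"
    proof (rule sum_list_le)
      fix p assume p: "p \<in> set (tl (splits js))"
      then have p1: "p \<in> set (splits js)" and p2: "fst p \<noteq> []" using tl_splits[OF p] by auto
      have l0: "length (fst p) > 0" using p2 by simp
      have ss: "length (fst p) + length (snd p) = length js" "set (fst p) \<subseteq> set js" "set (snd p) \<subseteq> set js"
        using splits_set[OF p1] by auto
      have l: "length (snd p) < length js" using ss(1) l0 by linarith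
      have s1: "set (fst p) \<subseteq> I" and s2: "set (snd p) \<subseteq> I" using ss less.prems by auto
      have "spec_norm (JD (fst p) y ** ypartl (snd p) K y) \<le> spec_norm (JD (fst p) y) * spec_norm (ypartl (snd p) K y)"
        by (rule spec_mult)
      also have "\<dots> \<le> - chiD (fst p) (\<lambda>i. 0) * ypartl (snd p) (\<lambda>y. \<Phi> y ^ 1) (\<lambda>i. 0)"
        by (rule mult_mono[OF JD_bound[OF p2 s1] less.hyps[OF l s2] _ spec_nonneg])
           (rule order_trans[OF spec_nonneg JD_bound[OF p2 s1]])
      finally show "spec_norm (JD (fst p) y ** ypartl (snd p) K y) \<le> - chiD (fst p) (\<lambda>i. 0) * ypartl (snd p) (\<lambda>y. \<Phi> y ^ 1) (\<lambda>i. 0)" .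
    qed
    also have "\<dots> = \<sigma> * ypartl js (\<lambda>y. \<Phi> y ^ 1) (\<lambda>i. 0)"
      by (rule scalar_rec[OF less.prems ne, symmetric])
    finally have bS: "spec_norm S \<le> \<sigma> * ypartl js (\<lambda>y. \<Phi> y ^ 1) (\<lambda>i. 0)" .
    have "spec_norm (ypartl js K y) \<le> spec_norm (K y) * spec_norm S"
      unfolding e3 spec_neg by (rule spec_mult)
    also have "\<dots> \<le> (1 / \<sigma>) * (\<sigma> * ypartl js (\<lambda>y. \<Phi> y ^ 1) (\<lambda>i. 0))"
      by (rule mult_mono[OF K_bound bS _ spec_nonneg]) (use sigpos in simp)
    also have "\<dots> = ypartl js (\<lambda>y. \<Phi> y ^ 1) (\<lambda>i. 0)" using sigpos by simp
    finally show ?thesis .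
  qed
qed

lemma M_deriv_bound:
  assumes js: "set js \<subseteq> I"
  shows "spec_norm (ypartl js (\<lambda>y. K y ** transpose (K y)) y) \<le> ypartl js (\<lambda>y. \<Phi> y ^ 2) (\<lambda>i. 0)"
proof -
  have e: "ypartl js (\<lambda>y. K y ** transpose (K y)) y = (\<Sum>p\<leftarrow>splits js. ypartl (fst p) K y ** transpose (ypartl (snd p) K y))"
    by (rule leibniz[OF bb_mmt lopen_UNIV smooth_G[OF gK] smooth_G[OF gK] js UNIV_I])
  have "spec_norm (ypartl js (\<lambda>y. K y ** transpose (K y)) y) \<le> (\<Sum>p\<leftarrow>splits js. spec_norm (ypartl (fst p) K y ** transpose (ypartl (snd p) K y)))"
    unfolding e by (rule spec_sum_list)
  also have "\<dots> \<le> (\<Sum>p\<leftarrow>splits js. ypartl (fst p) (\<lambda>y. \<Phi> y ^ 1) (\<lambda>i. 0) * ypartl (snd p) (\<lambda>y. \<Phi> y ^ 1) (\<lambda>i. 0))"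
  proof (rule sum_list_le)
    fix p assume p: "p \<in> set (splits js)"
    have s1: "set (fst p) \<subseteq> I" and s2: "set (snd p) \<subseteq> I" using splits_set[OF p] js by auto
    have "spec_norm (ypartl (fst p) K y ** transpose (ypartl (snd p) K y)) \<le> spec_norm (ypartl (fst p) K y) * spec_norm (transpose (ypartl (snd p) K y))"
      by (rule spec_mult)
    also have "\<dots> \<le> spec_norm (ypartl (fst p) K y) * spec_norm (ypartl (snd p) K y)"
      by (rule mult_left_mono[OF spec_transpose spec_nonneg])
    also have "\<dots> \<le> ypartl (fst p) (\<lambda>y. \<Phi> y ^ 1) (\<lambda>i. 0) * ypartl (snd p) (\<lambda>y. \<Phi> y ^ 1) (\<lambda>i. 0)"
      by (rule mult_mono[OF K_deriv_bound[OF s1] K_deriv_bound[OF s2] Phi_deriv_nonneg[OF s1] spec_nonneg])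
    finally show "spec_norm (ypartl (fst p) K y ** transpose (ypartl (snd p) K y)) \<le> ypartl (fst p) (\<lambda>y. \<Phi> y ^ 1) (\<lambda>i. 0) * ypartl (snd p) (\<lambda>y. \<Phi> y ^ 1) (\<lambda>i. 0)" .
  qed
  also have "\<dots> = ypartl js (\<lambda>y. \<Phi> y ^ 2) (\<lambda>i. 0)" by (rule scalar_sq[OF js, symmetric])
  finally show ?thesis .
qed

end


lemma quad_zero:
  fixes \<alpha> \<beta> :: real
  assumes "\<And>t. 0 \<le> 2 * t * \<alpha> + t^2 * \<beta>"
  shows "\<alpha> = 0"
proof (rule ccontr)
  assume a: "\<alpha> \<noteq> 0"
  define d where "d = \<bar>\<beta>\<bar> + 1"
  have d: "d > 0" by (simp add: d_def)
  define t where "t = - \<alpha> / d"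
  have "0 \<le> 2 * t * \<alpha> + t^2 * \<beta>" by (rule assms)
  also have "2 * t * \<alpha> + t^2 * \<beta> = \<alpha>^2 * (\<beta> - 2 * d) / d^2"
    using d by (simp add: t_def field_simps power2_eq_square)
  finally have "0 \<le> \<alpha>^2 * (\<beta> - 2 * d)" using d by (simp add: zero_le_divide_iff)
  moreover have "\<beta> - 2 * d < 0" by (simp add: d_def)
  moreover have "\<alpha>^2 > 0" using a by simp
  ultimately have "\<alpha>^2 * (\<beta> - 2 * d) < 0" by (simp add: mult_pos_neg)
  with \<open>0 \<le> \<alpha>^2 * (\<beta> - 2 * d)\<close> show False by linarith
qed

lemma norm_add_sq: "norm (a + t *\<^sub>R b) ^ 2 = norm a ^ 2 + 2 * t * inner a b + t^2 * norm (b::'a::real_inner) ^ 2"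
proof -
  have "norm (a + t *\<^sub>R b) ^ 2 = inner (a + t *\<^sub>R b) (a + t *\<^sub>R b)" by (simp add: power2_norm_eq_inner)
  also have "\<dots> = inner a a + 2 * t * inner a b + t^2 * inner b b"
    by (simp add: inner_add_left inner_add_right inner_commute[of b a] power2_eq_square algebra_simps)
  finally show ?thesis by (simp add: power2_norm_eq_inner)
qed

lemma rayleigh:
  fixes A :: "real^'n^'n"
  assumes sv: "\<And>s. singular_value A s \<Longrightarrow> \<sigma> \<le> s" and sg: "\<sigma> \<ge> 0"
  shows "\<sigma> * norm v \<le> norm (A *v v)"
proof -
  define Q where "Q v = norm (A *v v) ^ 2" for v :: "real^'n"
  obtain i :: 'n where True by blast
  have ne: "sphere (0::real^'n) 1 \<noteq> {}" by (metis empty_iff mem_sphere_0 norm_axis_1)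
  have cQ: "continuous_on (sphere 0 1) Q" unfolding Q_def by (intro continuous_intros)
  obtain u where u: "u \<in> sphere 0 1" "\<And>v. v \<in> sphere 0 1 \<Longrightarrow> Q u \<le> Q v"
    using continuous_attains_inf[OF compact_sphere ne cQ] by blast
  have nu: "norm u = 1" using u(1) by simp
  define lam where "lam = Q u"
  have hom: "lam * norm v ^ 2 \<le> Q v" for v
  proof (cases "v = 0")
    case True then show ?thesis by (simp add: Q_def)
  next
    case False
    then have "(1 / norm v) *\<^sub>R v \<in> sphere 0 1" by simp
    then have "lam \<le> Q ((1 / norm v) *\<^sub>R v)" unfolding lam_def by (rule u(2))
    also have "Q ((1 / norm v) *\<^sub>R v) = Q v / norm v ^ 2"
      unfolding Q_def by (simp add: matrix_vector_mult_scaleR power_divide)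
    finally show ?thesis using False by (simp add: field_simps)
  qed
  have lam: "lam \<ge> 0" unfolding lam_def Q_def by simp
  define B where "B = transpose A ** A"
  have innB: "inner (A *v u) (A *v w) = inner (B *v u) w" for w
    unfolding B_def by (metis dot_lmul_matrix inner_commute matrix_vector_mul_assoc transpose_matrix_vector vector_transpose_matrix)
  have orth: "inner (B *v u - lam *\<^sub>R u) w = 0" for w
  proof -
    define \<alpha> where "\<alpha> = inner (A *v u) (A *v w) - lam * inner u w"
    define \<beta> where "\<beta> = norm (A *v w) ^ 2 - lam * norm w ^ 2"
    have "0 \<le> 2 * t * \<alpha> + t^2 * \<beta>" for t
    proof -
      have "lam * norm (u + t *\<^sub>R w) ^ 2 \<le> Q (u + t *\<^sub>R w)" by (rule hom)
      moreover have "norm (u + t *\<^sub>R w) ^ 2 = 1 + 2 * t * inner u w + t^2 * norm w ^ 2"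
      proof -
        have iu: "inner u u = 1" using nu by (simp add: power2_norm_eq_inner[symmetric])
        have iw: "inner w w = norm w ^ 2" by (simp add: power2_norm_eq_inner)
        have "norm (u + t *\<^sub>R w) ^ 2 = inner (u + t *\<^sub>R w) (u + t *\<^sub>R w)" by (simp add: power2_norm_eq_inner)
        also have "\<dots> = inner u u + 2 * t * inner u w + t^2 * inner w w"
          by (simp add: inner_add_left inner_add_right inner_commute[of w u] power2_eq_square algebra_simps)
        finally show ?thesis unfolding iu iw .
      qed
      moreover have "Q (u + t *\<^sub>R w) = lam + 2 * t * inner (A *v u) (A *v w) + t^2 * norm (A *v w) ^ 2"
        unfolding lam_def Q_def by (simp add: matrix_vector_right_distrib matrix_vector_mult_scaleR norm_add_sq)
      ultimately show ?thesis unfolding \<alpha>_def \<beta>_def by (simp add: algebra_simps)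
    qed
    then have "\<alpha> = 0" by (rule quad_zero)
    then show ?thesis unfolding \<alpha>_def innB by (simp add: inner_diff_left)
  qed
  have eig: "B *v u = lam *\<^sub>R u"
    using orth[of "B *v u - lam *\<^sub>R u"] by simp
  have "singular_value A (sqrt lam)"
    unfolding singular_value_def
  proof (intro conjI exI)
    show "sqrt lam \<ge> 0" using lam by simp
    show "u \<noteq> 0" using nu by auto
    show "(transpose A ** A) *v u = (sqrt lam)\<^sup>2 *\<^sub>R u" using eig lam by (simp add: B_def)
  qed
  then have "\<sigma> \<le> sqrt lam" by (rule sv)
  then have "\<sigma>^2 \<le> (sqrt lam)^2" using sg by (rule power_mono)
  then have "\<sigma>^2 \<le> lam" using lam by simp
  then have "\<sigma>^2 * norm v ^ 2 \<le> norm (A *v v) ^ 2" using hom[of v] unfolding Q_def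
    by (meson mult_right_mono order_trans zero_le_power2)
  then have "(\<sigma> * norm v)^2 \<le> norm (A *v v) ^ 2" by (simp add: power_mult_distrib)
  then show ?thesis using sg by (meson norm_ge_zero power2_le_imp_le)
qed


lemma a_seq_rec: "a_seq (Suc (Suc k)) = a_seq (Suc k) + a_seq k / 2"
proof -
  define r where "r = 1 + sqrt 3"
  define s where "s = 1 - sqrt 3"
  have s3: "sqrt 3 * sqrt 3 = 3" by simp
  have r2: "r^2 = 2 * r + 2" unfolding r_def power2_eq_square using s3 by (simp add: algebra_simps)
  have s2: "s^2 = 2 * s + 2" unfolding s_def power2_eq_square using s3 by (simp add: algebra_simps)
  have pw: "x ^ (k + 3) = x ^ (k + 1) * x^2" "x ^ (k + 2) = x ^ (k + 1) * x" for x :: real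
    by (simp_all add: power_add power2_eq_square power3_eq_cube mult_ac)
  have rr: "r ^ (k + 3) = 2 * r ^ (k + 2) + 2 * r ^ (k + 1)"
    unfolding pw r2 by (simp add: algebra_simps)
  have ss: "s ^ (k + 3) = 2 * s ^ (k + 2) + 2 * s ^ (k + 1)"
    unfolding pw s2 by (simp add: algebra_simps)
  have "a_seq (Suc (Suc k)) = (r ^ (k + 3) - s ^ (k + 3)) / (2 ^ (k + 3) * sqrt 3)"
    unfolding a_seq_def r_def s_def by (simp add: numeral_3_eq_3)
  also have "\<dots> = (r ^ (k + 2) - s ^ (k + 2)) / (2 ^ (k + 2) * sqrt 3) + ((r ^ (k + 1) - s ^ (k + 1)) / (2 ^ (k + 1) * sqrt 3)) / 2"
    unfolding rr ss by (simp add: field_simps power_add numeral_3_eq_3)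
  also have "\<dots> = a_seq (Suc k) + a_seq k / 2"
    unfolding a_seq_def r_def s_def by (simp add: numeral_2_eq_2)
  finally show ?thesis .
qed

lemma a_seq_ge1: "a_seq k \<ge> 1"
proof (induction k rule: less_induct)
  case (less k)
  show ?case
  proof (cases k)
    case 0 then show ?thesis by (simp add: a_seq_def)
  next
    case (Suc k')
    show ?thesis
    proof (cases k')
      case 0
      have "(1 + sqrt 3) * (1 + sqrt 3) - (1 - sqrt 3) * (1 - sqrt 3) = 4 * sqrt 3" by (simp add: algebra_simps)
      then show ?thesis using Suc 0 by (simp add: a_seq_def)
    next
      case (Suc k'')
      have "a_seq k = a_seq (Suc k'') + a_seq k'' / 2" using \<open>k = Suc k'\<close> Suc a_seq_rec by simp
      moreover have "a_seq (Suc k'') \<ge> 1" "a_seq k'' \<ge> 1" using less \<open>k = Suc k'\<close> Suc by auto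
      ultimately show ?thesis by simp
    qed
  qed
qed

lemma sin_frac: "sin (2 * pi * frac t) = sin (2 * pi * t)"
proof -
  have "2 * pi * frac t = 2 * pi * t - (2 * pi) * of_int \<lfloor>t\<rfloor>" by (simp add: frac_def algebra_simps)
  then show ?thesis by (simp add: sin_diff)
qed

lemma count_concat:
  "distinct L \<Longrightarrow> count_list (concat (map (\<lambda>j. replicate (\<nu> j) j) L)) i = (if i \<in> set L then \<nu> i else 0)"
proof (induction L)
  case Nil then show ?case by simp
next
  case (Cons j L)
  have r: "count_list (replicate n j) i = (if i = j then n else 0)" for n by (induction n) auto
  show ?case using Cons by (auto simp: r)
qed

lemma inv_B:
  fixes J K :: "real^'n^'n"
  assumes "J ** K = mat 1" "K ** J = mat 1"
  shows "matrix_inv (transpose J ** J) = K ** transpose K"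
proof -
  have r: "(transpose J ** J) ** (K ** transpose K) = mat 1"
  proof -
    have "(transpose J ** J) ** (K ** transpose K) = transpose J ** ((J ** K) ** transpose K)" by (simp add: matrix_mul_assoc)
    also have "\<dots> = transpose J ** transpose K" using assms(1) by simp
    also have "\<dots> = transpose (K ** J)" by (simp add: matrix_transpose_mul)
    also have "transpose (K ** J) = mat 1" using assms(2) by simp
    finally show ?thesis .
  qed
  then have inv: "invertible (transpose J ** J)" using invertible_right_inverse by blast
  then have "\<exists>A'. (transpose J ** J) ** A' = mat 1 \<and> A' ** (transpose J ** J) = mat 1" unfolding invertible_def .
  then have li: "matrix_inv (transpose J ** J) ** (transpose J ** J) = mat 1" unfolding matrix_inv_def by (rule someI2_ex) blast
  have "matrix_inv (transpose J ** J) = matrix_inv (transpose J ** J) ** ((transpose J ** J) ** (K ** transpose K))" using r by simp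
  also have "\<dots> = (matrix_inv (transpose J ** J) ** (transpose J ** J)) ** (K ** transpose K)" by (rule matrix_mul_assoc)
  also have "\<dots> = K ** transpose K" unfolding li by simp
  finally show ?thesis .
qed

lemma poch2: "pochhammer (2::real) k = real (k + 1) * fact k"
  by (induction k) (simp_all add: pochhammer_Suc algebra_simps)

context maj begin

lemma CF_le:
  assumes c: "c = 2 * pi" and s1: "\<sigma> \<le> 1" and xi: "\<xi> \<ge> 0" and supp: "\<forall>i. i \<notin> I \<longrightarrow> \<nu> i = 0"
  shows "CF 2 \<nu> (\<lambda>i. 0) \<le> 1 / \<sigma>^2 * (4 * pi * (1 + \<xi>) / \<sigma>^2) ^ (\<Sum>i\<in>I. \<nu> i) *
    (\<Sum>m\<in>Mset \<nu>. fact (mabs m) * a_seq (mabs m) * (\<Prod>j\<in>I. fact (m j) * b j ^ m j * real (Stirling (\<nu> j) (m j))))"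
proof -
  define N where "N = (\<Sum>i\<in>I. \<nu> i)"
  have CF0: "CF 2 \<nu> (\<lambda>i. 0) = (\<Sum>m\<in>Mset \<nu>. coef 2 \<nu> m * (1 / \<sigma>) ^ (2 + mabs m))"
    unfolding CF_def by (simp add: \<Phi>_def w0 E_def)
  have "(\<Sum>m\<in>Mset \<nu>. coef 2 \<nu> m * (1 / \<sigma>) ^ (2 + mabs m)) \<le>
     (\<Sum>m\<in>Mset \<nu>. 1 / \<sigma>^2 * (4 * pi * (1 + \<xi>) / \<sigma>^2) ^ N * (fact (mabs m) * a_seq (mabs m) * (\<Prod>j\<in>I. fact (m j) * b j ^ m j * real (Stirling (\<nu> j) (m j)))))"
  proof (rule sum_mono)
    fix m assume m: "m \<in> Mset \<nu>"
    define k where "k = mabs m"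
    define P where "P = (\<Prod>i\<in>I. b i ^ m i * real (Stirling (\<nu> i) (m i)))"
    define F where "F = (\<Prod>j\<in>I. fact (m j) :: real)"
    have Pnn: "P \<ge> 0" unfolding P_def using bnn by (auto intro!: prod_nonneg)
    have F1: "F \<ge> 1" unfolding F_def by (rule prod_ge_1) simp
    have kN: "k \<le> N" unfolding k_def N_def mabs_def using m by (auto simp: Mset_def intro!: sum_mono)
    have prodeq: "(\<Prod>j\<in>I. fact (m j) * b j ^ m j * real (Stirling (\<nu> j) (m j))) = F * P"
      unfolding F_def P_def by (simp add: prod.distrib mult.assoc)
    have lhs: "coef 2 \<nu> m * (1 / \<sigma>) ^ (2 + mabs m) = (fact k * c ^ N * P / \<sigma>^2) * (real (k + 1) * (1 / \<sigma>) ^ k)"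
      unfolding coef_def k_def[symmetric] N_def[symmetric] P_def[symmetric]
      by (simp add: poch2 power_add field_simps power2_eq_square)
    have rhs: "1 / \<sigma>^2 * (4 * pi * (1 + \<xi>) / \<sigma>^2) ^ N * (fact k * a_seq k * (F * P))
       = (fact k * c ^ N * P / \<sigma>^2) * (2 ^ N * (1 / \<sigma>) ^ (2 * N) * ((1 + \<xi>) ^ N * a_seq k * F))"
    proof -
      have "4 * pi * (1 + \<xi>) / \<sigma>^2 = (2*pi) * (2 * ((1/\<sigma>)^2 * (1+\<xi>)))" by (simp add: field_simps)
      then have h: "(4 * pi * (1 + \<xi>) / \<sigma>^2) ^ N = (2*pi)^N * (2^N * ((1/\<sigma>)^(2*N) * (1+\<xi>)^N))"
        by (simp only: power_mult_distrib power_mult)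
      show ?thesis unfolding h c by (simp add: divide_inverse ac_simps)
    qed
    have X: "fact k * c ^ N * P / \<sigma>^2 \<ge> 0" using Pnn cpos by simp
    have i1: "real (k + 1) \<le> 2 ^ N"
    proof -
      have "k + 1 \<le> (2::nat) ^ k" using Suc_leI[OF less_exp[of k]] by simp
      also have "\<dots> \<le> 2 ^ N" using kN by (simp add: power_increasing)
      finally show ?thesis by (metis of_nat_le_iff of_nat_numeral of_nat_power)
    qed
    have i2: "(1 / \<sigma>) ^ k \<le> (1 / \<sigma>) ^ (2 * N)" using s1 spos kN by (intro power_increasing) auto
    have i3: "1 \<le> (1 + \<xi>) ^ N * a_seq k * F"
    proof -
      have e1: "1 \<le> (1 + \<xi>) ^ N" using xi by (simp add: one_le_power)
      have "1 * 1 \<le> (1 + \<xi>) ^ N * a_seq k" by (rule mult_mono[OF e1 a_seq_ge1]) (use e1 in auto)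
      then have e2: "1 \<le> (1 + \<xi>) ^ N * a_seq k" by simp
      have "1 * 1 \<le> (1 + \<xi>) ^ N * a_seq k * F" by (rule mult_mono[OF e2 F1]) (use e2 in auto)
      then show ?thesis by simp
    qed
    have "real (k + 1) * (1 / \<sigma>) ^ k \<le> 2 ^ N * (1 / \<sigma>) ^ (2 * N) * 1"
      using i1 i2 spos by (simp add: mult_mono)
    also have "\<dots> \<le> 2 ^ N * (1 / \<sigma>) ^ (2 * N) * ((1 + \<xi>) ^ N * a_seq k * F)"
      using i3 spos by (intro mult_left_mono) auto
    finally have "real (k + 1) * (1 / \<sigma>) ^ k \<le> 2 ^ N * (1 / \<sigma>) ^ (2 * N) * ((1 + \<xi>) ^ N * a_seq k * F)" .
    then have "coef 2 \<nu> m * (1 / \<sigma>) ^ (2 + mabs m) \<le> 1 / \<sigma>^2 * (4 * pi * (1 + \<xi>) / \<sigma>^2) ^ N * (fact k * a_seq k * (F * P))"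
      unfolding lhs rhs using X by (rule mult_left_mono)
    then show "coef 2 \<nu> m * (1 / \<sigma>) ^ (2 + mabs m) \<le> 1 / \<sigma>^2 * (4 * pi * (1 + \<xi>) / \<sigma>^2) ^ N * (fact (mabs m) * a_seq (mabs m) * (\<Prod>j\<in>I. fact (m j) * b j ^ m j * real (Stirling (\<nu> j) (m j))))"
      unfolding prodeq k_def .
  qed
  then show ?thesis unfolding CF0 N_def[symmetric] by (simp add: sum_distrib_left)
qed

end


theorem lemma3p1:
  fixes Dref :: "(real^'n) set"
    and \<psi> :: "nat \<Rightarrow> real^'n \<Rightarrow> real^'n"
    and \<sigma>min \<sigma>max :: real
    and y :: "nat \<Rightarrow> real"
    and \<nu> :: "nat \<Rightarrow> nat"
  assumes dim: "CARD('n) \<in> {2, 3}"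
    and dom: "lipschitz_domain Dref"
    and A1: "\<forall>y \<in> Ucube. inj_on (\<lambda>x. Vmap \<psi> x y) (closure Dref) \<and>
                         C2_closure Dref (\<lambda>x. Vmap \<psi> x y)"
    and A2: "\<exists>C > 0. \<forall>y \<in> Ucube. C2_norm_le Dref (\<lambda>x. Vmap \<psi> x y) C \<and>
               C2_closure ((\<lambda>x. Vmap \<psi> x y) ` Dref) (inv_into (closure Dref) (\<lambda>x. Vmap \<psi> x y)) \<and>
               C2_norm_le ((\<lambda>x. Vmap \<psi> x y) ` Dref) (inv_into (closure Dref) (\<lambda>x. Vmap \<psi> x y)) C"
    and A3: "0 < \<sigma>min" "\<sigma>min \<le> 1" "1 \<le> \<sigma>max"
            "\<forall>x \<in> Dref. \<forall>y \<in> Ucube. \<forall>s. singular_value (Jmat \<psi> x y) s \<longrightarrow> s \<in> {\<sigma>min..\<sigma>max}"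
    and A4: "\<forall>i. bdd_above ((\<lambda>x. norm (\<psi> i x)) ` Dref) \<and>
                 bdd_above ((\<lambda>x. spec_norm (jacobian (\<psi> i) x)) ` Dref)"
            "summable (\<lambda>i. W1inf_norm Dref (\<psi> i))"
    and y: "y \<in> Ucube"
    and nu: "finite (mi_supp \<nu>)"
  shows "\<forall>x \<in> Dref.
     spec_norm (ymderiv \<nu> (\<lambda>y'. matrix_inv (Bmat \<psi> x y')) y)
       \<le> (let b = (\<lambda>i. W1inf_norm Dref (\<psi> i) / sqrt 6); \<xi> = (\<Sum>i. b i) in
          1 / \<sigma>min^2 * (4 * pi * (1 + \<xi>) / \<sigma>min^2) ^ mi_abs \<nu> *
          (\<Sum>m \<in> {m. \<forall>j. m j \<le> \<nu> j}.
             fact (mi_abs m) * a_seq (mi_abs m) *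
             (\<Prod>j\<in>mi_supp \<nu>. fact (m j) * b j ^ m j * real (Stirling (\<nu> j) (m j)))))"
proof (intro ballI)
  fix x assume x: "x \<in> Dref"
  define M where "M i = jacobian (\<psi> i) x" for i
  define J where "J = Jmat \<psi> x"
  define W where "W i = W1inf_norm Dref (\<psi> i)" for i
  define b where "b i = W i / sqrt 6" for i
  define I where "I = mi_supp \<nu>"
  have specW: "spec_norm (M i) \<le> W i" for i
  proof -
    have "spec_norm (M i) \<le> Sup ((\<lambda>x. spec_norm (jacobian (\<psi> i) x)) ` Dref)"
      unfolding M_def apply (rule cSUP_upper[OF x]) using A4(1)[rule_format, of i] by (rule conjunct2)
    then show ?thesis unfolding W_def W1inf_norm_def by (simp add: le_max_iff_disj)
  qed
  have Wnn: "0 \<le> W i" for i using specW[of i] spec_nonneg[of "M i"] by linarith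
  have bnn: "0 \<le> b i" for i using Wnn[of i] by (simp add: b_def)
  have Weq: "W = (\<lambda>i. W1inf_norm Dref (\<psi> i))" by (rule ext) (simp add: W_def)
  have summW: "summable W" using A4(2) unfolding Weq .
  have summb: "summable b" unfolding b_def by (rule summable_divide[OF summW])
  have summM: "summable (\<lambda>i. norm (M i))"
  proof (rule summable_comparison_test'[of "\<lambda>i. real CARD('n) * W i" 0])
    show "summable (\<lambda>i. real CARD('n) * W i)" by (rule summable_mult[OF summW])
    fix i
    have "norm (M i) \<le> real CARD('n) * spec_norm (M i)" by (rule frob_le_spec)
    also have "\<dots> \<le> real CARD('n) * W i" by (rule mult_left_mono[OF specW]) simp
    finally show "norm (norm (M i)) \<le> real CARD('n) * W i" by simp
  qed
  have per: "J y' = J (\<lambda>i. frac (y' i))" for y' unfolding J_def Jmat_def by (simp add: sin_frac)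
  have fracU: "(\<lambda>i. frac (y' i)) \<in> Ucube" for y'
    unfolding Ucube_def by (auto simp: frac_ge_0 less_imp_le[OF frac_lt_1])
  have lower: "\<sigma>min * norm v \<le> norm (J y' *v v)" for y' v
  proof -
    have "\<sigma>min * norm v \<le> norm (J (\<lambda>i. frac (y' i)) *v v)"
    proof (rule rayleigh)
      fix s assume "singular_value (J (\<lambda>i. frac (y' i))) s"
      then show "\<sigma>min \<le> s" using A3(4) x fracU[of y'] unfolding J_def by auto
    next
      show "0 \<le> \<sigma>min" using A3(1) by simp
    qed
    then show ?thesis using per[of y'] by simp
  qed
  have finI: "finite I" using nu by (simp add: I_def)
  have suppI: "\<forall>i. i \<notin> I \<longrightarrow> \<nu> i = 0" by (simp add: I_def mi_supp_def)
  interpret B: both I b \<sigma>min M J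
  proof unfold_locales
    show "finite I" by (rule finI)
    show "\<And>i. 0 \<le> b i" by (rule bnn)
    show "0 < 2 * pi" by simp
    show "0 < \<sigma>min" by (rule A3(1))
    show "summable (\<lambda>i. norm (M i))" by (rule summM)
    show "\<And>y. J y = mat 1 + (1 / sqrt 6) *\<^sub>R (\<Sum>i. sin (2 * pi * y i) *\<^sub>R M i)"
      by (simp add: J_def Jmat_def M_def)
    show "\<And>y v. \<sigma>min * norm v \<le> norm (J y *v v)" by (rule lower)
    show "\<And>j. j \<in> I \<Longrightarrow> spec_norm (M j) / sqrt 6 \<le> b j"
      using specW by (simp add: b_def divide_right_mono)
  qed
  define js where "js = concat (map (\<lambda>j. replicate (\<nu> j) j) (sorted_list_of_set I))"
  have jsI: "set js \<subseteq> I" using finI by (auto simp: js_def)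
  have cntjs: "cnt js = \<nu>"
  proof
    fix i
    have "cnt js i = (if i \<in> I then \<nu> i else 0)"
      unfolding cnt_def js_def using count_concat[OF distinct_sorted_list_of_set, of \<nu> I i] finI by simp
    then show "cnt js i = \<nu> i" using suppI by auto
  qed
  have F: "(\<lambda>y'. matrix_inv (Bmat \<psi> x y')) = (\<lambda>y'. B.K y' ** transpose (B.K y'))"
  proof
    fix y'
    show "matrix_inv (Bmat \<psi> x y') = B.K y' ** transpose (B.K y')"
      unfolding Bmat_def J_def[symmetric] by (rule inv_B[OF B.K_right B.K_left])
  qed
  have "spec_norm (ymderiv \<nu> (\<lambda>y'. matrix_inv (Bmat \<psi> x y')) y) = spec_norm (ypartl js (\<lambda>y'. B.K y' ** transpose (B.K y')) y)"
    unfolding ymderiv_def F js_def I_def ..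
  also have "\<dots> \<le> ypartl js (\<lambda>y. B.\<Phi> y ^ 2) (\<lambda>i. 0)" by (rule B.M_deriv_bound[OF jsI])
  also have "\<dots> = B.CF 2 \<nu> (\<lambda>i. 0)" using B.CF_closed[OF jsI B.zero_\<Omega>] cntjs by simp
  also have "\<dots> \<le> 1 / \<sigma>min^2 * (4 * pi * (1 + (\<Sum>i. b i)) / \<sigma>min^2) ^ (\<Sum>i\<in>I. \<nu> i) *
    (\<Sum>m\<in>Mset \<nu>. fact (B.mabs m) * a_seq (B.mabs m) * (\<Prod>j\<in>I. fact (m j) * b j ^ m j * real (Stirling (\<nu> j) (m j))))"
    by (rule B.CF_le[OF refl A3(2) suminf_nonneg[OF summb bnn] suppI])
  also have "\<dots> = (let b = (\<lambda>i. W1inf_norm Dref (\<psi> i) / sqrt 6); \<xi> = (\<Sum>i. b i) in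
          1 / \<sigma>min^2 * (4 * pi * (1 + \<xi>) / \<sigma>min^2) ^ mi_abs \<nu> *
          (\<Sum>m \<in> {m. \<forall>j. m j \<le> \<nu> j}.
             fact (mi_abs m) * a_seq (mi_abs m) *
             (\<Prod>j\<in>mi_supp \<nu>. fact (m j) * b j ^ m j * real (Stirling (\<nu> j) (m j)))))"
  proof -
    have bb: "(\<lambda>i. W1inf_norm Dref (\<psi> i) / sqrt 6) = b" by (simp add: b_def W_def fun_eq_iff)
    have ma: "mi_abs \<nu> = (\<Sum>i\<in>I. \<nu> i)" by (simp add: mi_abs_def I_def)
    have ms: "{m. \<forall>j. m j \<le> \<nu> j} = Mset \<nu>" by (simp add: Mset_def)
    have mm: "mi_abs m = B.mabs m" if m: "m \<in> Mset \<nu>" for m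
    proof -
      have sub: "mi_supp m \<subseteq> I"
      proof
        fix j assume "j \<in> mi_supp m"
        then have "m j \<noteq> 0" by (simp add: mi_supp_def)
        moreover have "m j \<le> \<nu> j" using m by (simp add: Mset_def)
        ultimately have "\<nu> j \<noteq> 0" by simp
        then show "j \<in> I" by (simp add: I_def mi_supp_def)
      qed
      show ?thesis unfolding mi_abs_def B.mabs_def
        by (rule sum.mono_neutral_left[OF finI sub]) (auto simp: mi_supp_def)
    qed
    show ?thesis unfolding Let_def bb ma ms I_def[symmetric]
      by (intro arg_cong2[where f="(*)"] refl sum.cong) (simp_all add: mm)
  qed
  finally show "spec_norm (ymderiv \<nu> (\<lambda>y'. matrix_inv (Bmat \<psi> x y')) y) \<le> (let b = (\<lambda>i. W1inf_norm Dref (\<psi> i) / sqrt 6); \<xi> = (\<Sum>i. b i) in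
          1 / \<sigma>min^2 * (4 * pi * (1 + \<xi>) / \<sigma>min^2) ^ mi_abs \<nu> *
          (\<Sum>m \<in> {m. \<forall>j. m j \<le> \<nu> j}.
             fact (mi_abs m) * a_seq (mi_abs m) *
             (\<Prod>j\<in>mi_supp \<nu>. fact (m j) * b j ^ m j * real (Stirling (\<nu> j) (m j)))))" .
qed


end
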